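(* Let $B$ satisfy the standing assumptions below with constant $C_B$, let $T>0$ and $\xi,\xi'\in C([0,T];\mathcal{M}_w)$. Then the flow $\varphi^{t,B(\xi)}:\mathbb{R}^d\to\mathbb{R}^d$ is twice differentiable and, for all $t\in[0,T]$, $$\|D\varphi^{t,B(\xi)}\|_\infty\le e^{C_BT(\|\xi\|_T+1)},$$ $$\|\varphi^{t,B(\xi)}-\varphi^{t,B(\xi')}\|_\infty\le C_BTe^{C_BT(\|\xi\|_T+1)}\|\xi-\xi'\|_T,$$ $$\|D\varphi^{t,B(\xi)}-D\varphi^{t,B(\xi')}\|_\infty\le C_BTe^{C_B(T+1)(\|\xi\|_T+\|\xi'\|_T+2)}\left(1+C_BT(\|\xi\|_T+1)e^{C_BT(\|\xi\|_T+1)}\right)\|\xi-\xi'\|_T,$$ and for all $x,y\in\mathbb{R}^d$, $$|D\varphi^{t,B(\xi)}(x)-D\varphi^{t,B(\xi)}(y)|\le C_BT(\|\xi\|_T+1)e^{C_B(2T+1)(\|\xi\|_T+1)}|x-y|.$$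
   Context: $\mathcal{M}$ is the dual of $C_b(\mathbb{R}^d;\mathbb{R}^d)$ (bounded continuous vector fields, sup norm $\|\cdot\|_\infty$). Weak norm: $\|\xi\|=\sup\{\xi(\theta):\|\theta\|_\infty+\mathrm{Lip}(\theta)\le1\}$; $\mathcal{M}_w$ is $\mathcal{M}$ with the metric $d(\xi,\xi')=\|\xi-\xi'\|$. $C_b^2(\mathbb{R}^d,\mathbb{R}^d)$ denotes $C^2$ vector fields bounded with their first and second derivatives, with norm $\|\cdot\|_{C_b^2}$ the sum of the sup norms. Standing assumptions: $B:\mathcal{M}_w\to C_b^2(\mathbb{R}^d,\mathbb{R}^d)$ is continuous and there is $C_B>0$ such that for all $\xi,\xi'\in\mathcal{M}$: $\|B(\xi)\|_{C_b^2}\le C_B(\|\xi\|+1)$, $\|B(\xi)-B(\xi')\|_\infty\le C_B\|\xi-\xi'\|$, $\|DB(\xi)-DB(\xi')\|_\infty\le C_B\|\xi-\xi'\|$, where $D$ is the spatial derivative. For $\xi\in C([0,T];\mathcal{M}_w)$, $\varphi^{t,B(\xi)}$ denotes the flow of the ODE $\frac{dx_t}{dt}=B(\xi_t)(x_t)$, i.e. $\varphi^{0,B(\xi)}=\mathrm{id}$ and $\partial_t\varphi^{t,B(\xi)}(x)=B(\xi_t)(\varphi^{t,B(\xi)}(x))$; and $\|\xi\|_T:=\sup_{0\le t\le T}\|\xi_t\|$. *)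

theory Defs
  imports "HOL-Analysis.Analysis"
begin

text \<open>The space M: the dual of C_b(R^d;R^d) (bounded continuous vector fields with sup norm).
  R^d is modelled by an arbitrary Euclidean space 'a.\<close>
type_synonym 'a meas = "('a \<Rightarrow>\<^sub>C 'a) \<Rightarrow>\<^sub>L real"

definition Lip :: "('a::metric_space \<Rightarrow>\<^sub>C 'b::real_normed_vector) \<Rightarrow> real" where
  "Lip \<theta> = Inf {L. lipschitz_on L UNIV (apply_bcontfun \<theta>)}"

definition test_fields :: "('a::euclidean_space \<Rightarrow>\<^sub>C 'a) set" where
  "test_fields = {\<theta>. (\<exists>L. lipschitz_on L UNIV (apply_bcontfun \<theta>)) \<and> norm \<theta> + Lip \<theta> \<le> 1}"

definition wnorm :: "'a::euclidean_space meas \<Rightarrow> real" where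
  "wnorm \<xi> = (SUP \<theta>\<in>test_fields. blinfun_apply \<xi> \<theta>)"

definition sD :: "('a::real_normed_vector \<Rightarrow> 'b::real_normed_vector) \<Rightarrow> 'a \<Rightarrow> ('a \<Rightarrow>\<^sub>L 'b)" where
  "sD f x = Blinfun (frechet_derivative f (at x))"

definition supn :: "('a \<Rightarrow> 'b::real_normed_vector) \<Rightarrow> real" where
  "supn f = (SUP x. norm (f x))"

definition Cb2 :: "('a::euclidean_space \<Rightarrow> 'a) \<Rightarrow> bool" where
  "Cb2 f \<longleftrightarrow> (\<forall>x. f differentiable (at x)) \<and> (\<forall>x. sD f differentiable (at x))
     \<and> continuous_on UNIV (sD (sD f))
     \<and> bounded (range f) \<and> bounded (range (sD f)) \<and> bounded (range (sD (sD f)))"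

definition normC2 :: "('a::euclidean_space \<Rightarrow> 'a) \<Rightarrow> real" where
  "normC2 f = supn f + supn (sD f) + supn (sD (sD f))"

definition standing :: "('a::euclidean_space meas \<Rightarrow> 'a \<Rightarrow> 'a) \<Rightarrow> real \<Rightarrow> bool" where
  "standing B CB \<longleftrightarrow> CB > 0 \<and> (\<forall>\<xi>. Cb2 (B \<xi>))
     \<and> (\<forall>\<xi> \<epsilon>. \<epsilon> > 0 \<longrightarrow> (\<exists>\<delta>>0. \<forall>\<xi>'. wnorm (\<xi>' - \<xi>) < \<delta> \<longrightarrow>
             normC2 (\<lambda>x. B \<xi>' x - B \<xi> x) < \<epsilon>))
     \<and> (\<forall>\<xi>. normC2 (B \<xi>) \<le> CB * (wnorm \<xi> + 1))
     \<and> (\<forall>\<xi> \<xi>'. supn (\<lambda>x. B \<xi> x - B \<xi>' x) \<le> CB * wnorm (\<xi> - \<xi>'))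
     \<and> (\<forall>\<xi> \<xi>'. supn (\<lambda>x. sD (B \<xi>) x - sD (B \<xi>') x) \<le> CB * wnorm (\<xi> - \<xi>'))"

definition wcont :: "real \<Rightarrow> (real \<Rightarrow> 'a::euclidean_space meas) \<Rightarrow> bool" where
  "wcont T \<xi> \<longleftrightarrow> (\<forall>t\<in>{0..T}. \<forall>\<epsilon>>0. \<exists>\<delta>>0. \<forall>s\<in>{0..T}. \<bar>s - t\<bar> < \<delta> \<longrightarrow> wnorm (\<xi> s - \<xi> t) < \<epsilon>)"

definition normT :: "real \<Rightarrow> (real \<Rightarrow> 'a::euclidean_space meas) \<Rightarrow> real" where
  "normT T \<xi> = (SUP t\<in>{0..T}. wnorm (\<xi> t))"

definition is_flow :: "('m \<Rightarrow> 'a::real_normed_vector \<Rightarrow> 'a) \<Rightarrow> real \<Rightarrow> (real \<Rightarrow> 'm) \<Rightarrow> (real \<Rightarrow> 'a \<Rightarrow> 'a) \<Rightarrow> bool" where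
  "is_flow B T \<xi> \<phi> \<longleftrightarrow> (\<forall>x. \<phi> 0 x = x \<and>
     (\<forall>t\<in>{0..T}. ((\<lambda>s. \<phi> s x) has_vector_derivative B (\<xi> t) (\<phi> t x)) (at t within {0..T})))"

end

theory Submission
  imports Defs
begin


lemma vd_approx:
  assumes "(f has_vector_derivative f') (at x within S)" "e > 0"
  shows "\<exists>d>0. \<forall>y\<in>S. norm (y - x) < d \<longrightarrow> norm (f y - f x - (y - x) *\<^sub>R f') \<le> e * norm (y - x)"
  using assms unfolding has_vector_derivative_def has_derivative_within_alt by blast

lemma gronwall_cmp:
  fixes f :: "real \<Rightarrow> 'v::real_normed_vector" and w :: "real \<Rightarrow> real"
  assumes a: "0 \<le> a"
    and fd: "\<And>t. t\<in>{0..T} \<Longrightarrow> (f has_vector_derivative f' t) (at t within {0..T})"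
    and wd: "\<And>t. t\<in>{0..T} \<Longrightarrow> (w has_real_derivative w' t) (at t within {0..T})"
    and init: "norm (f 0) \<le> w 0"
    and bnd: "\<And>t. t\<in>{0..T} \<Longrightarrow> norm (f' t) \<le> a * norm (f t) + (w' t - a * w t)"
    and t: "t \<in> {0..T}"
  shows "norm (f t) \<le> w t"
proof -
  have fc: "continuous_on {0..T} f"
    using fd by (meson continuous_on_eq_continuous_within has_vector_derivative_continuous)
  have wc: "continuous_on {0..T} w"
    using wd by (meson DERIV_continuous continuous_on_eq_continuous_within)
  have main: "norm (f s) < w s + \<epsilon> * exp ((a+1) * s)" if eps: "\<epsilon> > 0" and s: "s \<in> {0..T}" for \<epsilon> s
  proof (rule ccontr)
    assume ns: "\<not> ?thesis"
    define v where "v s = w s + \<epsilon> * exp ((a+1) * s)" for s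
    have vd: "(v has_real_derivative (w' t + \<epsilon> * ((a+1) * exp ((a+1)*t)))) (at t within {0..T})"
      if "t \<in> {0..T}" for t
      unfolding v_def using wd[OF that] by (auto intro!: derivative_eq_intros)
    have vc: "continuous_on {0..T} v" unfolding v_def by (intro continuous_intros wc)
    define S where "S = {t\<in>{0..T}. v t \<le> norm (f t)}"
    have Sne: "S \<noteq> {}" using ns s unfolding S_def v_def by auto
    have "S = {0..T} \<inter> (\<lambda>t. norm (f t) - v t) -` {0..}" unfolding S_def by auto
    moreover have "closed ({0..T} \<inter> (\<lambda>t. norm (f t) - v t) -` {0..})"
      by (rule continuous_closed_preimage) (auto intro!: continuous_intros vc fc)
    ultimately have Scl: "closed S" by simp
    define t0 where "t0 = Inf S"
    have bdd: "bdd_below S" unfolding S_def by (auto intro!: bdd_belowI[of _ 0])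
    have t0S: "t0 \<in> S" unfolding t0_def using closed_contains_Inf[OF Sne bdd Scl] .
    have below: "norm (f u) < v u" if "u \<in> {0..T}" "u < t0" for u
    proof (rule ccontr)
      assume "\<not> norm (f u) < v u"
      then have "u \<in> S" using that unfolding S_def by auto
      then have "t0 \<le> u" unfolding t0_def using bdd by (simp add: cInf_lower)
      then show False using that by simp
    qed
    have t0T: "t0 \<in> {0..T}" and ft0: "v t0 \<le> norm (f t0)" using t0S unfolding S_def by auto
    have t0pos: "t0 > 0"
    proof (rule ccontr)
      assume "\<not> t0 > 0" then have "t0 = 0" using t0T by auto
      then show False using ft0 init eps unfolding v_def by auto
    qed
    define E where "E = exp ((a+1) * t0)"
    have Epos: "E > 0" unfolding E_def by simp
    define \<rho> where "\<rho> = \<epsilon> * E / 4"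
    have rpos: "\<rho> > 0" unfolding \<rho>_def using eps Epos by simp
    obtain d1 where d1: "d1 > 0" "\<forall>y\<in>{0..T}. norm (y - t0) < d1 \<longrightarrow>
        norm (f y - f t0 - (y - t0) *\<^sub>R f' t0) \<le> \<rho> * norm (y - t0)"
      using vd_approx[OF fd[OF t0T] rpos] by blast
    have vd': "(v has_vector_derivative (w' t0 + \<epsilon> * ((a+1) * E))) (at t0 within {0..T})"
      using vd[OF t0T] unfolding E_def by (simp add: has_real_derivative_iff_has_vector_derivative)
    obtain d2 where d2: "d2 > 0" "\<forall>y\<in>{0..T}. norm (y - t0) < d2 \<longrightarrow>
        norm (v y - v t0 - (y - t0) *\<^sub>R (w' t0 + \<epsilon> * ((a+1) * E))) \<le> \<rho> * norm (y - t0)"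
      using vd_approx[OF vd' rpos] by blast
    define h where "h = min (min d1 d2 / 2) (min t0 (1 / (a+1)))"
    have hpos: "h > 0" unfolding h_def using d1 d2 t0pos a by auto
    have hd1: "h < d1" "h < d2" unfolding h_def using d1 d2 by auto
    have ht0: "h \<le> t0" unfolding h_def by auto
    have ha: "h * a \<le> 1"
    proof -
      have "h \<le> 1 / (a+1)" unfolding h_def by auto
      then have "h * (a+1) \<le> 1" using a by (simp add: field_simps)
      then show ?thesis using hpos by (simp add: algebra_simps)
    qed
    define u where "u = t0 - h"
    have uT: "u \<in> {0..T}" "u < t0" unfolding u_def using ht0 hpos t0T by auto
    have nu: "norm (u - t0) = h" unfolding u_def using hpos by simp
    have e1: "norm (f u - f t0 + h *\<^sub>R f' t0) \<le> \<rho> * h"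
      using d1(2)[rule_format, OF uT(1)] nu hd1 unfolding u_def by simp
    have e2: "norm (v u - v t0 + h *\<^sub>R (w' t0 + \<epsilon> * ((a+1) * E))) \<le> \<rho> * h"
      using d2(2)[rule_format, OF uT(1)] nu hd1 unfolding u_def by simp
    have "norm (f t0) \<le> norm (f u) + h * norm (f' t0) + \<rho> * h"
      using e1 norm_triangle_ineq4[of "f t0" "f u"] norm_triangle_ineq[of "f u - f t0 + h *\<^sub>R f' t0" "- (h *\<^sub>R f' t0)"]
      by (smt (verit, ccfv_threshold) add_diff_cancel_left' diff_add_cancel hpos norm_minus_cancel norm_minus_commute norm_scaleR norm_triangle_ineq4)
    moreover have "norm (f' t0) \<le> a * norm (f t0) + (w' t0 - a * w t0)" using bnd[OF t0T] .
    ultimately have A: "norm (f t0) \<le> norm (f u) + h * (a * norm (f t0) + (w' t0 - a * w t0)) + \<rho> * h"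
      using hpos by (smt (verit) mult_left_mono)
    have B: "v u \<le> v t0 - h * (w' t0 + \<epsilon> * ((a+1) * E)) + \<rho> * h"
      using e2 by (simp add: abs_le_iff)
    have C: "(1 - h * a) * v t0 \<le> (1 - h * a) * norm (f t0)"
      using ft0 ha by (simp add: mult_left_mono)
    have vt0: "v t0 = w t0 + \<epsilon> * E" unfolding v_def E_def by simp
    have "v u < norm (f u)"
    proof -
      have "norm (f u) \<ge> (1 - h*a) * norm (f t0) - h * (w' t0 - a * w t0) - \<rho> * h"
        using A by (simp add: algebra_simps)
      moreover have "(1 - h*a) * norm (f t0) - h * (w' t0 - a * w t0) - \<rho> * h
          \<ge> (1 - h*a) * v t0 - h * (w' t0 - a * w t0) - \<rho> * h" using C by simp
      moreover have "(1 - h*a) * v t0 - h * (w' t0 - a * w t0) - \<rho> * h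
          = v t0 - h * (w' t0 + \<epsilon> * ((a+1) * E)) + \<rho> * h + h * (\<epsilon> * E) - 2 * \<rho> * h"
        unfolding vt0 by (simp add: algebra_simps)
      moreover have "h * (\<epsilon> * E) - 2 * \<rho> * h > 0"
      proof -
        have "2 * \<rho> < \<epsilon> * E" unfolding \<rho>_def using eps Epos by simp
        then have "2 * \<rho> * h < (\<epsilon> * E) * h" using hpos by (rule mult_strict_right_mono)
        then show ?thesis by (simp add: mult.commute)
      qed
      ultimately show ?thesis using B by linarith
    qed
    then show False using below[OF uT] by simp
  qed
  show ?thesis
  proof (rule field_le_epsilon)
    fix e :: real assume e: "e > 0"
    have "norm (f t) < w t + (e / exp ((a+1)*t)) * exp ((a+1)*t)"
      using main[of "e / exp ((a+1)*t)" t] e t by simp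
    then show "norm (f t) \<le> w t + e" by simp
  qed
qed



fun picard :: "(real \<Rightarrow> 'z::banach \<Rightarrow> 'z) \<Rightarrow> (real \<Rightarrow> 'z) \<Rightarrow> 'z \<Rightarrow> nat \<Rightarrow> real \<Rightarrow> 'z" where
  "picard L c z0 0 = (\<lambda>t. z0)"
| "picard L c z0 (Suc n) = (\<lambda>t. z0 + integral {0..t} (\<lambda>s. L s (picard L c z0 n s) + c s))"

lemma linear_ode_exists:
  fixes L :: "real \<Rightarrow> 'z::banach \<Rightarrow> 'z" and c :: "real \<Rightarrow> 'z"
  assumes T: "0 < T"
    and lin: "\<And>t. linear (L t)"
    and M: "0 \<le> M"
    and bnd: "\<And>t z. t \<in> {0..T} \<Longrightarrow> norm (L t z) \<le> M * norm z"
    and cont: "\<And>g. continuous_on {0..T} g \<Longrightarrow> continuous_on {0..T} (\<lambda>t. L t (g t))"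
    and cc: "continuous_on {0..T} c"
  shows "\<exists>z. z 0 = z0 \<and> (\<forall>t\<in>{0..T}. (z has_vector_derivative (L t (z t) + c t)) (at t within {0..T}))"
proof -
  define P where "P = picard L c z0"
  have P0: "P 0 = (\<lambda>t. z0)" unfolding P_def by simp
  have PS: "P (Suc n) t = z0 + integral {0..t} (\<lambda>s. L s (P n s) + c s)" for n t
    unfolding P_def by simp
  have contder: "continuous_on {0..T} (P n) \<and>
      (\<forall>t\<in>{0..T}. (P (Suc n) has_vector_derivative (L t (P n t) + c t)) (at t within {0..T}))" for n
  proof (induction n)
    case 0
    have c1: "continuous_on {0..T} (\<lambda>s. L s (P 0 s) + c s)"
      by (intro continuous_intros cont cc) (simp add: P0)
    show ?case
      using integral_has_vector_derivative[OF c1]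
      by (auto simp: P0 PS[abs_def] intro!: derivative_eq_intros)
  next
    case (Suc n)
    have c0: "continuous_on {0..T} (P (Suc n))"
      using Suc.IH by (meson continuous_on_eq_continuous_within has_vector_derivative_continuous)
    have c1: "continuous_on {0..T} (\<lambda>s. L s (P (Suc n) s) + c s)"
      by (intro continuous_intros cont cc c0)
    show ?case
      using integral_has_vector_derivative[OF c1] c0
      by (auto simp: PS[abs_def] intro!: derivative_eq_intros)
  qed
  have Pc: "continuous_on {0..T} (P n)" for n using contder by blast
  have Pd: "t \<in> {0..T} \<Longrightarrow> (P (Suc n) has_vector_derivative (L t (P n t) + c t)) (at t within {0..T})" for n t
    using contder by blast
  have Pzero: "P n 0 = z0" for n by (cases n) (auto simp: P0 PS)
  obtain t1 where t1: "t1 \<in> {0..T}" "\<And>s. s \<in> {0..T} \<Longrightarrow> norm (P 1 s - P 0 s) \<le> norm (P 1 t1 - P 0 t1)"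
  proof -
    have "continuous_on {0..T} (\<lambda>s. norm (P 1 s - P 0 s))" by (intro continuous_intros Pc)
    then show ?thesis using continuous_attains_sup[of "{0..T}" "\<lambda>s. norm (P 1 s - P 0 s)"] T that
      by auto
  qed
  define C where "C = norm (P 1 t1 - P 0 t1)"
  have C0: "0 \<le> C" unfolding C_def by simp
  have est: "\<forall>t\<in>{0..T}. norm (P (Suc n) t - P n t) \<le> C * ((M * t)^n / fact n)" for n
  proof (induction n)
    case 0 then show ?case using t1 unfolding C_def by simp
  next
    case (Suc n)
    show ?case
    proof
      fix t assume t: "t \<in> {0..T}"
      define d where "d s = P (Suc (Suc n)) s - P (Suc n) s" for s
      define \<phi> where "\<phi> s = C * ((M * s)^(Suc n) / fact (Suc n))" for s
      show "norm (P (Suc (Suc n)) t - P (Suc n) t) \<le> C * ((M * t)^(Suc n) / fact (Suc n))"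
      proof (cases "t = 0")
        case True then show ?thesis by (simp add: Pzero)
      next
        case False
        then have t0: "0 < t" using t by simp
        have dd: "(d has_vector_derivative L x (P (Suc n) x - P n x)) (at x)" if "0 < x" "x < t" for x
        proof -
          have x: "x \<in> {0..T}" "0 < x" "x < T" using that t by auto
          have "(d has_vector_derivative (L x (P (Suc n) x) + c x) - (L x (P n x) + c x)) (at x within {0..T})"
            unfolding d_def by (intro derivative_intros Pd x)
          then show ?thesis using x by (simp add: at_within_Icc_at linear_diff[OF lin])
        qed
        have \<phi>d: "(\<phi> has_vector_derivative C * (M * ((M * x)^n / fact n))) (at x)" for x
        proof -
          have \<phi>e: "\<phi> = (\<lambda>s. (C * M^(Suc n) / fact (Suc n)) * s^(Suc n))"
            unfolding \<phi>_def by (auto simp: power_mult_distrib)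
          have "(\<phi> has_real_derivative (C * M^(Suc n) / fact (Suc n)) * (of_nat (Suc n) * x^n)) (at x)"
          proof -
            have "((\<lambda>s. s^(Suc n)) has_real_derivative of_nat (Suc n) * x^n) (at x)"
              using DERIV_pow[of "Suc n" x] by simp
            then show ?thesis unfolding \<phi>e by (rule DERIV_cmult)
          qed
          moreover have "(C * M^(Suc n) / fact (Suc n)) * (of_nat (Suc n) * x^n) = C * (M * ((M * x)^n / fact n))"
            by (simp add: field_simps fact_Suc power_mult_distrib del: of_nat_Suc)
          ultimately show ?thesis by (simp add: has_real_derivative_iff_has_vector_derivative power_mult_distrib)
        qed
        have "norm (d t - d 0) \<le> \<phi> t - \<phi> 0"
        proof (rule differentiable_bound_general[OF t0 _ _ dd \<phi>d])
          show "continuous_on {0..t} d" unfolding d_def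
            using t by (intro continuous_intros continuous_on_subset[OF Pc]) auto
          show "continuous_on {0..t} \<phi>" unfolding \<phi>_def by (intro continuous_intros) auto
          fix x assume x: "0 < x" "x < t"
          have "norm (L x (P (Suc n) x - P n x)) \<le> M * norm (P (Suc n) x - P n x)" using x t by (intro bnd) auto
          also have "\<dots> \<le> M * (C * ((M * x)^n / fact n))"
            using Suc.IH x t M by (intro mult_left_mono) auto
          finally show "norm (L x (P (Suc n) x - P n x)) \<le> C * (M * ((M * x)^n / fact n))"
            by (simp add: algebra_simps)
        qed
        then show ?thesis unfolding d_def \<phi>_def by (simp add: Pzero)
      qed
    qed
  qed
  define G where "G t = z0 + (\<Sum>i. P (Suc i) t - P i t)" for t
  have ul0: "uniform_limit {0..T} (\<lambda>n t. \<Sum>i<n. P (Suc i) t - P i t) (\<lambda>t. \<Sum>i. P (Suc i) t - P i t) sequentially"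
  proof (rule Weierstrass_m_test)
    fix n t assume t: "t \<in> {0..T}"
    have "norm (P (Suc n) t - P n t) \<le> C * ((M * t)^n / fact n)" using est t by blast
    also have "\<dots> \<le> C * ((M * T)^n / fact n)"
      using t M C0 by (intro mult_left_mono divide_right_mono power_mono mult_left_mono) auto
    finally show "norm (P (Suc n) t - P n t) \<le> C * (inverse (fact n) * (M * T)^n)" by (simp add: field_simps)
  next
    show "summable (\<lambda>n. C * (inverse (fact n) * (M * T)^n))"
      by (intro summable_mult summable_exp)
  qed
  have ul: "uniform_limit {0..T} P G sequentially"
  proof (rule uniform_limitI)
    fix e :: real assume e: "e > 0"
    have "\<forall>\<^sub>F n in sequentially. \<forall>x\<in>{0..T}. dist (\<Sum>i<n. P (Suc i) x - P i x) (\<Sum>i. P (Suc i) x - P i x) < e"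
      using ul0 e unfolding uniform_limit_iff by blast
    then show "\<forall>\<^sub>F n in sequentially. \<forall>x\<in>{0..T}. dist (P n x) (G x) < e"
    proof eventually_elim
      case (elim n)
      have tel: "(\<Sum>i<n. P (Suc i) x - P i x) = P n x - z0" for x
        using sum_lessThan_telescope[of "\<lambda>i. P i x" n] by (simp add: P0)
      show ?case using elim by (simp add: tel G_def dist_norm algebra_simps)
    qed
  qed
  have Gc: "continuous_on {0..T} G"
    by (rule uniform_limit_theorem[OF _ ul]) (auto intro: always_eventually Pc)
  have lim: "(\<lambda>n. P n t) \<longlonglongrightarrow> G t" if "t \<in> {0..T}" for t
    using tendsto_uniform_limitI[OF ul that] .
  have "\<exists>g. \<forall>x\<in>{0..T}. (\<lambda>n. P (Suc n) x) \<longlonglongrightarrow> g x \<and>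
      (g has_derivative (\<lambda>h. h *\<^sub>R (L x (G x) + c x))) (at x within {0..T})"
  proof (rule has_derivative_sequence[of "{0..T}" "\<lambda>n. P (Suc n)" "\<lambda>n x h. h *\<^sub>R (L x (P n x) + c x)" "\<lambda>x h. h *\<^sub>R (L x (G x) + c x)" 0 z0])
    show "convex {0..T::real}" by simp
    show "0 \<in> {0..T}" using T by simp
    show "(\<lambda>n. P (Suc n) 0) \<longlonglongrightarrow> z0" by (simp add: Pzero)
    fix n x assume "x \<in> {0..T}"
    then show "(P (Suc n) has_derivative (\<lambda>h. h *\<^sub>R (L x (P n x) + c x))) (at x within {0..T})"
      using Pd unfolding has_vector_derivative_def by blast
  next
    fix e :: real assume e: "e > 0"
    have "\<forall>\<^sub>F n in sequentially. \<forall>x\<in>{0..T}. dist (P n x) (G x) < e / (M + 1)"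
      using ul e M unfolding uniform_limit_iff by simp
    then show "\<forall>\<^sub>F n in sequentially. \<forall>x\<in>{0..T}. \<forall>h. norm (h *\<^sub>R (L x (P n x) + c x) - h *\<^sub>R (L x (G x) + c x)) \<le> e * norm h"
    proof eventually_elim
      case (elim n)
      show ?case
      proof (intro ballI allI)
        fix x h assume x: "x \<in> {0..T}"
        have "norm (h *\<^sub>R (L x (P n x) + c x) - h *\<^sub>R (L x (G x) + c x)) = \<bar>h\<bar> * norm (L x (P n x - G x))"
          by (simp add: linear_diff[OF lin] flip: scaleR_diff_right)
        also have "\<dots> \<le> \<bar>h\<bar> * (M * norm (P n x - G x))" using x by (intro mult_left_mono bnd) auto
        also have "\<dots> \<le> \<bar>h\<bar> * ((M + 1) * (e / (M + 1)))"
          using elim x M by (intro mult_left_mono mult_mono) (auto simp: dist_norm less_imp_le)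
        also have "\<dots> = e * norm h" using M by simp
        finally show "norm (h *\<^sub>R (L x (P n x) + c x) - h *\<^sub>R (L x (G x) + c x)) \<le> e * norm h" .
      qed
    qed
  qed
  then obtain g where g: "\<And>x. x \<in> {0..T} \<Longrightarrow> (\<lambda>n. P (Suc n) x) \<longlonglongrightarrow> g x"
    "\<And>x. x \<in> {0..T} \<Longrightarrow> (g has_derivative (\<lambda>h. h *\<^sub>R (L x (G x) + c x))) (at x within {0..T})"
    by blast
  have gG: "g x = G x" if "x \<in> {0..T}" for x
    using LIMSEQ_unique[OF g(1)[OF that] LIMSEQ_Suc[OF lim[OF that]]] .
  show ?thesis
  proof (intro exI conjI ballI)
    show "g 0 = z0" using gG[of 0] lim[of 0] T g(1)[of 0] by (auto simp: Pzero LIMSEQ_const_iff)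
    fix t assume t: "t \<in> {0..T}"
    show "(g has_vector_derivative L t (g t) + c t) (at t within {0..T})"
      using g(2)[OF t] gG[OF t] unfolding has_vector_derivative_def by simp
  qed
qed



section \<open>Spatial derivative\<close>

lemma sD_works:
  assumes "f differentiable (at x)"
  shows "(f has_derivative blinfun_apply (sD f x)) (at x)"
proof -
  have d: "(f has_derivative frechet_derivative f (at x)) (at x)"
    using assms frechet_derivative_works by blast
  then have "bounded_linear (frechet_derivative f (at x))" by (rule has_derivative_bounded_linear)
  then show ?thesis using d unfolding sD_def by (simp add: bounded_linear_Blinfun_apply)
qed

lemma sD_eq:
  assumes "(f has_derivative blinfun_apply A) (at x)"
  shows "sD f x = A"
proof -
  have "frechet_derivative f (at x) = blinfun_apply A" using frechet_derivative_at[OF assms] by simp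
  then show ?thesis unfolding sD_def by (simp add: blinfun_apply_inverse)
qed

lemma sD_diff:
  assumes "f differentiable (at x)" "g differentiable (at x)"
  shows "sD (\<lambda>x. f x - g x) x = sD f x - sD g x"
  by (rule sD_eq) (auto intro!: derivative_eq_intros sD_works assms simp: blinfun.diff_left)

lemma sD_diff_fun:
  assumes "\<And>x. f differentiable (at x)" "\<And>x. g differentiable (at x)"
  shows "sD (\<lambda>x. f x - g x) = (\<lambda>x. sD f x - sD g x)"
  using sD_diff assms by blast

section \<open>Sup norm\<close>

lemma supn_ge:
  assumes "bounded (range f)"
  shows "norm (f x) \<le> supn f"
proof -
  have "bdd_above (range (\<lambda>x. norm (f x)))"
    using assms by (auto simp: bounded_iff bdd_above_def)
  then show ?thesis unfolding supn_def by (rule cSUP_upper[OF UNIV_I])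
qed

lemma supn_nonneg:
  assumes "bounded (range f)"
  shows "0 \<le> supn f"
  using supn_ge[OF assms, of undefined] norm_ge_zero order_trans by blast

lemma bounded_range_diff:
  fixes f g :: "'b \<Rightarrow> 'c::real_normed_vector"
  assumes "bounded (range f)" "bounded (range g)"
  shows "bounded (range (\<lambda>x. f x - g x))"
proof -
  obtain a b where "\<And>x. norm (f x) \<le> a" "\<And>x. norm (g x) \<le> b"
    using assms by (auto simp: bounded_iff)
  then have "\<And>x. norm (f x - g x) \<le> a + b"
    by (meson add_mono norm_triangle_ineq4 order_trans)
  then show ?thesis by (auto simp: bounded_iff)
qed

lemma Cb2_bounds:
  assumes "Cb2 f"
  shows "norm (f x) \<le> normC2 f" "norm (sD f x) \<le> normC2 f" "norm (sD (sD f) x) \<le> normC2 f"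
proof -
  have b: "bounded (range f)" "bounded (range (sD f))" "bounded (range (sD (sD f)))"
    using assms unfolding Cb2_def by auto
  note n = supn_nonneg[OF b(1)] supn_nonneg[OF b(2)] supn_nonneg[OF b(3)]
  show "norm (f x) \<le> normC2 f" using supn_ge[OF b(1), of x] n unfolding normC2_def by linarith
  show "norm (sD f x) \<le> normC2 f" using supn_ge[OF b(2), of x] n unfolding normC2_def by linarith
  show "norm (sD (sD f) x) \<le> normC2 f" using supn_ge[OF b(3), of x] n unfolding normC2_def by linarith
qed

section \<open>Test fields and weak norm\<close>

lemma Lip_nonneg:
  assumes "lipschitz_on L UNIV (apply_bcontfun \<theta>)"
  shows "0 \<le> Lip \<theta>"
  unfolding Lip_def using assms by (intro cInf_greatest) (auto simp: lipschitz_on_def)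

lemma Lip_zero: "Lip (0::'a::metric_space \<Rightarrow>\<^sub>C 'b::real_normed_vector) = 0"
proof -
  have l: "lipschitz_on 0 UNIV (apply_bcontfun (0::'a \<Rightarrow>\<^sub>C 'b))"
    by (simp add: lipschitz_on_def)
  have "Lip (0::'a \<Rightarrow>\<^sub>C 'b) \<le> 0" unfolding Lip_def
    using l by (intro cInf_lower) (auto simp: bdd_below_def lipschitz_on_def)
  moreover have "0 \<le> Lip (0::'a \<Rightarrow>\<^sub>C 'b)" by (rule Lip_nonneg[OF l])
  ultimately show ?thesis by simp
qed

lemma lipschitz_uminus_iff:
  "lipschitz_on L UNIV (apply_bcontfun (- \<theta>)) \<longleftrightarrow> lipschitz_on L UNIV (apply_bcontfun \<theta>)"
  by (simp add: lipschitz_on_def dist_minus)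

lemma Lip_uminus: "Lip (- \<theta>) = Lip \<theta>"
  unfolding Lip_def lipschitz_uminus_iff ..

lemma test_fields_zero: "0 \<in> test_fields"
  unfolding test_fields_def by (auto simp: Lip_zero intro!: exI[of _ 0] simp: lipschitz_on_def)

lemma test_fields_uminus: "\<theta> \<in> test_fields \<Longrightarrow> - \<theta> \<in> test_fields"
  unfolding test_fields_def by (auto simp: Lip_uminus lipschitz_uminus_iff)

lemma test_fields_norm: "\<theta> \<in> test_fields \<Longrightarrow> norm \<theta> \<le> 1"
  unfolding test_fields_def using Lip_nonneg by fastforce

lemma wnorm_bdd:
  fixes \<xi> \<eta> \<zeta> :: "'a::euclidean_space meas" shows "bdd_above ((\<lambda>\<theta>. blinfun_apply \<xi> \<theta>) ` test_fields)"
proof (rule bdd_aboveI2)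
  fix \<theta> :: "'a \<Rightarrow>\<^sub>C 'a" assume "\<theta> \<in> test_fields"
  then have "blinfun_apply \<xi> \<theta> \<le> norm \<xi> * norm \<theta>" "norm \<theta> \<le> 1"
    using norm_blinfun[of \<xi> \<theta>] test_fields_norm by auto
  then show "blinfun_apply \<xi> \<theta> \<le> norm \<xi>"
    by (smt (verit) mult_left_le norm_ge_zero)
qed

lemma wnorm_ge:
  fixes \<xi> \<eta> \<zeta> :: "'a::euclidean_space meas" shows "\<theta> \<in> test_fields \<Longrightarrow> blinfun_apply \<xi> \<theta> \<le> wnorm \<xi>"
  unfolding wnorm_def by (rule cSUP_upper[OF _ wnorm_bdd])

lemma wnorm_nonneg:
  fixes \<xi> \<eta> \<zeta> :: "'a::euclidean_space meas" shows "0 \<le> wnorm \<xi>"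
  using wnorm_ge[OF test_fields_zero, of \<xi>] by simp

lemma wnorm_add:
  fixes \<xi> \<eta> \<zeta> :: "'a::euclidean_space meas" shows "wnorm (\<xi> + \<eta>) \<le> wnorm \<xi> + wnorm \<eta>"
  unfolding wnorm_def[of "\<xi> + \<eta>"]
proof (rule cSUP_least)
  show "test_fields \<noteq> {}" using test_fields_zero by auto
  fix \<theta> :: "'a \<Rightarrow>\<^sub>C 'a" assume "\<theta> \<in> test_fields"
  then show "blinfun_apply (\<xi> + \<eta>) \<theta> \<le> wnorm \<xi> + wnorm \<eta>"
    using wnorm_ge[of \<theta> \<xi>] wnorm_ge[of \<theta> \<eta>] by (simp add: blinfun.add_left)
qed

lemma wnorm_uminus:
  fixes \<xi> \<eta> \<zeta> :: "'a::euclidean_space meas" shows "wnorm (- \<xi>) = wnorm \<xi>"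
proof -
  have le: "wnorm (- \<eta>) \<le> wnorm \<eta>" for \<eta> :: "'a meas"
    unfolding wnorm_def[of "- \<eta>"]
  proof (rule cSUP_least)
    show "test_fields \<noteq> {}" using test_fields_zero by auto
    fix \<theta> :: "'a \<Rightarrow>\<^sub>C 'a" assume "\<theta> \<in> test_fields"
    then have "blinfun_apply \<eta> (- \<theta>) \<le> wnorm \<eta>" by (intro wnorm_ge test_fields_uminus)
    then show "blinfun_apply (- \<eta>) \<theta> \<le> wnorm \<eta>"
      by (simp add: blinfun.minus_left blinfun.minus_right)
  qed
  show ?thesis using le[of \<xi>] le[of "- \<xi>"] by simp
qed

lemma wnorm_diff:
  fixes \<xi> \<eta> \<zeta> :: "'a::euclidean_space meas" shows "wnorm (\<xi> - \<eta>) \<le> wnorm \<xi> + wnorm \<eta>"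
  using wnorm_add[of \<xi> "- \<eta>"] by (simp add: wnorm_uminus)

lemma wnorm_commute:
  fixes \<xi> \<eta> \<zeta> :: "'a::euclidean_space meas" shows "wnorm (\<xi> - \<eta>) = wnorm (\<eta> - \<xi>)"
  using wnorm_uminus[of "\<xi> - \<eta>"] by simp

lemma wnorm_tri:
  fixes \<xi> \<eta> \<zeta> :: "'a::euclidean_space meas" shows "wnorm (\<xi> - \<zeta>) \<le> wnorm (\<xi> - \<eta>) + wnorm (\<eta> - \<zeta>)"
  using wnorm_add[of "\<xi> - \<eta>" "\<eta> - \<zeta>"] by simp

lemma wcont_diff:
  assumes "wcont T \<xi>" "wcont T \<xi>'"
  shows "wcont T (\<lambda>s. \<xi> s - \<xi>' s)"
  unfolding wcont_def
proof (intro ballI allI impI)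
  fix t e assume t: "t \<in> {0..T}" and e: "(e::real) > 0"
  obtain d1 where d1: "d1 > 0" "\<forall>s\<in>{0..T}. \<bar>s - t\<bar> < d1 \<longrightarrow> wnorm (\<xi> s - \<xi> t) < e/2"
    using assms(1) t e unfolding wcont_def by (meson half_gt_zero)
  obtain d2 where d2: "d2 > 0" "\<forall>s\<in>{0..T}. \<bar>s - t\<bar> < d2 \<longrightarrow> wnorm (\<xi>' s - \<xi>' t) < e/2"
    using assms(2) t e unfolding wcont_def by (meson half_gt_zero)
  show "\<exists>\<delta>>0. \<forall>s\<in>{0..T}. \<bar>s - t\<bar> < \<delta> \<longrightarrow> wnorm (\<xi> s - \<xi>' s - (\<xi> t - \<xi>' t)) < e"
  proof (intro exI[of _ "min d1 d2"] conjI ballI impI)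
    show "0 < min d1 d2" using d1 d2 by simp
    fix s assume s: "s \<in> {0..T}" "\<bar>s - t\<bar> < min d1 d2"
    have "\<xi> s - \<xi>' s - (\<xi> t - \<xi>' t) = (\<xi> s - \<xi> t) - (\<xi>' s - \<xi>' t)" by (simp add: algebra_simps)
    then have "wnorm (\<xi> s - \<xi>' s - (\<xi> t - \<xi>' t)) \<le> wnorm (\<xi> s - \<xi> t) + wnorm (\<xi>' s - \<xi>' t)"
      using wnorm_diff by metis
    also have "\<dots> < e" using d1(2) d2(2) s by fastforce
    finally show "wnorm (\<xi> s - \<xi>' s - (\<xi> t - \<xi>' t)) < e" .
  qed
qed

lemma wcont_continuous:
  assumes "wcont T \<xi>"
  shows "continuous_on {0..T} (\<lambda>t. wnorm (\<xi> t))"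
  unfolding continuous_on_iff
proof (intro ballI allI impI)
  fix t e assume t: "t \<in> {0..T}" and e: "(e::real) > 0"
  obtain d where d: "d > 0" "\<forall>s\<in>{0..T}. \<bar>s - t\<bar> < d \<longrightarrow> wnorm (\<xi> s - \<xi> t) < e"
    using assms t e unfolding wcont_def by blast
  show "\<exists>d>0. \<forall>s\<in>{0..T}. dist s t < d \<longrightarrow> dist (wnorm (\<xi> s)) (wnorm (\<xi> t)) < e"
  proof (intro exI[of _ d] conjI ballI impI)
    show "d > 0" by fact
    fix s assume s: "s \<in> {0..T}" "dist s t < d"
    have w: "wnorm (\<xi> s - \<xi> t) < e" using d s by (simp add: dist_real_def)
    have "wnorm (\<xi> s) \<le> wnorm (\<xi> t) + wnorm (\<xi> s - \<xi> t)"
      using wnorm_add[of "\<xi> t" "\<xi> s - \<xi> t"] by simp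
    moreover have "wnorm (\<xi> t) \<le> wnorm (\<xi> s) + wnorm (\<xi> s - \<xi> t)"
      using wnorm_add[of "\<xi> s" "\<xi> t - \<xi> s"] wnorm_commute[of "\<xi> t" "\<xi> s"] by simp
    ultimately show "dist (wnorm (\<xi> s)) (wnorm (\<xi> t)) < e" using w by (simp add: dist_real_def)
  qed
qed

lemma wcont_normT:
  assumes "wcont T \<xi>" "t \<in> {0..T}"
  shows "wnorm (\<xi> t) \<le> normT T \<xi>"
proof -
  have "compact ((\<lambda>t. wnorm (\<xi> t)) ` {0..T})"
    by (rule compact_continuous_image[OF wcont_continuous[OF assms(1)]]) simp
  then have "bdd_above ((\<lambda>t. wnorm (\<xi> t)) ` {0..T})"
    by (meson bounded_imp_bdd_above compact_imp_bounded)
  then show ?thesis unfolding normT_def using assms(2) by (rule cSUP_upper2) auto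
qed

lemma normT_nonneg:
  assumes "wcont T \<xi>" "0 \<le> T"
  shows "0 \<le> normT T \<xi>"
  using wcont_normT[OF assms(1), of 0] assms(2) wnorm_nonneg[of "\<xi> 0"] by simp

section \<open>Consequences of the standing assumptions\<close>

lemma standing_CB: "standing B CB \<Longrightarrow> CB > 0" unfolding standing_def by simp

lemma standing_Cb2: "standing B CB \<Longrightarrow> Cb2 (B \<xi>)" unfolding standing_def by simp

lemma standing_bounds:
  assumes "standing B CB"
  shows "norm (B \<xi> x) \<le> CB * (wnorm \<xi> + 1)"
    "norm (sD (B \<xi>) x) \<le> CB * (wnorm \<xi> + 1)"
    "norm (sD (sD (B \<xi>)) x) \<le> CB * (wnorm \<xi> + 1)"
  using Cb2_bounds[OF standing_Cb2[OF assms, of \<xi>]] assms unfolding standing_def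
  by (meson order_trans)+

lemma standing_lip0:
  assumes "standing B CB"
  shows "norm (B \<xi> x - B \<xi>' x) \<le> CB * wnorm (\<xi> - \<xi>')"
proof -
  have b: "bounded (range (\<lambda>x. B \<xi> x - B \<xi>' x))"
    using standing_Cb2[OF assms] by (intro bounded_range_diff) (auto simp: Cb2_def)
  show ?thesis using supn_ge[OF b, of x] assms unfolding standing_def by (meson order_trans)
qed

lemma standing_lip1:
  assumes "standing B CB"
  shows "norm (sD (B \<xi>) x - sD (B \<xi>') x) \<le> CB * wnorm (\<xi> - \<xi>')"
proof -
  have b: "bounded (range (\<lambda>x. sD (B \<xi>) x - sD (B \<xi>') x))"
    using standing_Cb2[OF assms] by (intro bounded_range_diff) (auto simp: Cb2_def)
  show ?thesis using supn_ge[OF b, of x] assms unfolding standing_def by (meson order_trans)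
qed

lemma standing_cont2:
  assumes "standing B CB" "e > 0"
  shows "\<exists>d>0. \<forall>\<xi>'. wnorm (\<xi>' - \<xi>) < d \<longrightarrow> (\<forall>x. norm (sD (sD (B \<xi>')) x - sD (sD (B \<xi>)) x) < e)"
proof -
  obtain d where d: "d > 0" "\<forall>\<xi>'. wnorm (\<xi>' - \<xi>) < d \<longrightarrow> normC2 (\<lambda>x. B \<xi>' x - B \<xi> x) < e"
    using assms unfolding standing_def by blast
  show ?thesis
  proof (intro exI conjI allI impI)
    show "d > 0" by fact
    fix \<xi>' x assume w: "wnorm (\<xi>' - \<xi>) < d"
    have c1: "Cb2 (B \<xi>')" "Cb2 (B \<xi>)" using standing_Cb2[OF assms(1)] by auto
    have e1: "sD (\<lambda>x. B \<xi>' x - B \<xi> x) = (\<lambda>x. sD (B \<xi>') x - sD (B \<xi>) x)"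
      using c1 by (intro sD_diff_fun) (auto simp: Cb2_def)
    have e2: "sD (\<lambda>x. sD (B \<xi>') x - sD (B \<xi>) x) = (\<lambda>x. sD (sD (B \<xi>')) x - sD (sD (B \<xi>)) x)"
      using c1 by (intro sD_diff_fun) (auto simp: Cb2_def)
    have b0: "bounded (range (\<lambda>x. B \<xi>' x - B \<xi> x))"
      using c1 by (intro bounded_range_diff) (auto simp: Cb2_def)
    have b1: "bounded (range (sD (\<lambda>x. B \<xi>' x - B \<xi> x)))"
      unfolding e1 using c1 by (intro bounded_range_diff) (auto simp: Cb2_def)
    have b2: "bounded (range (sD (sD (\<lambda>x. B \<xi>' x - B \<xi> x))))"
      unfolding e1 e2 using c1 by (intro bounded_range_diff) (auto simp: Cb2_def)
    have "norm (sD (sD (\<lambda>x. B \<xi>' x - B \<xi> x)) x) \<le> normC2 (\<lambda>x. B \<xi>' x - B \<xi> x)"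
      using supn_ge[OF b2, of x] supn_nonneg[OF b0] supn_nonneg[OF b1] unfolding normC2_def by linarith
    also have "\<dots> < e" using d w by blast
    finally show "norm (sD (sD (B \<xi>')) x - sD (sD (B \<xi>)) x) < e" unfolding e1 e2 .
  qed
qed



section \<open>Gronwall corollaries\<close>

lemma gc_lin:
  fixes f :: "real \<Rightarrow> 'v::real_normed_vector"
  assumes a: "0 \<le> a" and \<beta>: "0 \<le> \<beta>"
    and fd: "\<And>t. t\<in>{0..T} \<Longrightarrow> (f has_vector_derivative f' t) (at t within {0..T})"
    and f0: "norm (f 0) = 0"
    and bnd: "\<And>t. t\<in>{0..T} \<Longrightarrow> norm (f' t) \<le> a * norm (f t) + \<beta>"
    and t: "t \<in> {0..T}"
  shows "norm (f t) \<le> \<beta> * t * exp (a * t)"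
proof (rule gronwall_cmp[where w="\<lambda>t. \<beta> * t * exp (a * t)" and w'="\<lambda>t. \<beta> * exp (a * t) + \<beta> * t * (a * exp (a * t))", OF a fd _ _ _ t])
  fix s assume s: "s \<in> {0..T}"
  show "((\<lambda>t. \<beta> * t * exp (a * t)) has_real_derivative \<beta> * exp (a * s) + \<beta> * s * (a * exp (a * s))) (at s within {0..T})"
    by (auto intro!: derivative_eq_intros)
  have "\<beta> \<le> \<beta> * exp (a * s)" using s a \<beta> by (simp add: mult_le_cancel_left1)
  then show "norm (f' s) \<le> a * norm (f s) + (\<beta> * exp (a * s) + \<beta> * s * (a * exp (a * s)) - a * (\<beta> * s * exp (a * s)))"
    using bnd[OF s] by (simp add: algebra_simps)
next
  show "norm (f 0) \<le> \<beta> * 0 * exp (a * 0)" using f0 by simp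
qed

lemma gc_exp:
  fixes f :: "real \<Rightarrow> 'v::real_normed_vector"
  assumes a: "0 \<le> a"
    and fd: "\<And>t. t\<in>{0..T} \<Longrightarrow> (f has_vector_derivative f' t) (at t within {0..T})"
    and f0: "norm (f 0) \<le> c"
    and bnd: "\<And>t. t\<in>{0..T} \<Longrightarrow> norm (f' t) \<le> a * norm (f t)"
    and t: "t \<in> {0..T}"
  shows "norm (f t) \<le> c * exp (a * t)"
proof (rule gronwall_cmp[where w="\<lambda>t. c * exp (a * t)" and w'="\<lambda>t. c * (a * exp (a * t))", OF a fd _ _ _ t])
  fix s assume s: "s \<in> {0..T}"
  show "((\<lambda>t. c * exp (a * t)) has_real_derivative c * (a * exp (a * s))) (at s within {0..T})"
    by (auto intro!: derivative_eq_intros)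
  show "norm (f' s) \<le> a * norm (f s) + (c * (a * exp (a * s)) - a * (c * exp (a * s)))"
    using bnd[OF s] by (simp add: algebra_simps)
next
  show "norm (f 0) \<le> c * exp (a * 0)" using f0 by simp
qed

lemma gc_sq:
  fixes f :: "real \<Rightarrow> 'v::real_normed_vector"
  assumes a: "0 \<le> a"
    and fd: "\<And>t. t\<in>{0..T} \<Longrightarrow> (f has_vector_derivative f' t) (at t within {0..T})"
    and f0: "norm (f 0) = 0"
    and bnd: "\<And>t. t\<in>{0..T} \<Longrightarrow> norm (f' t) \<le> a * norm (f t) + c * (a * exp (2 * a * t))"
    and t: "t \<in> {0..T}"
  shows "norm (f t) \<le> c * (exp (a * t) * (exp (a * t) - 1))"
proof (rule gronwall_cmp[where w="\<lambda>t. c * (exp (a * t) * (exp (a * t) - 1))" and w'="\<lambda>t. c * (2 * a * exp (2 * a * t) - a * exp (a * t))", OF a fd _ _ _ t])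
  fix s assume s: "s \<in> {0..T}"
  have e: "(\<lambda>t. c * (exp (a * t) * (exp (a * t) - 1))) = (\<lambda>t. c * (exp (2 * a * t) - exp (a * t)))"
    by (auto simp: algebra_simps simp flip: exp_add)
  show "((\<lambda>t. c * (exp (a * t) * (exp (a * t) - 1))) has_real_derivative c * (2 * a * exp (2 * a * s) - a * exp (a * s))) (at s within {0..T})"
    unfolding e by (auto intro!: derivative_eq_intros simp: algebra_simps)
  show "norm (f' s) \<le> a * norm (f s) + (c * (2 * a * exp (2 * a * s) - a * exp (a * s)) - a * (c * (exp (a * s) * (exp (a * s) - 1))))"
    using bnd[OF s] by (simp add: algebra_simps flip: exp_add)
next
  show "norm (f 0) \<le> c * (exp (a * 0) * (exp (a * 0) - 1))" using f0 by simp
qed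



lemma quad_has_derivative:
  assumes bl: "bounded_linear A"
    and q: "\<And>y. norm (f y - f x - A (y - x)) \<le> C * norm (y - x)^2"
  shows "(f has_derivative A) (at x)"
  unfolding has_derivative_at_alt
proof (intro conjI allI impI bl)
  fix e :: real assume e: "e > 0"
  show "\<exists>d>0. \<forall>y. norm (y - x) < d \<longrightarrow> norm (f y - f x - A (y - x)) \<le> e * norm (y - x)"
  proof (intro exI[of _ "e / (\<bar>C\<bar> + 1)"] conjI allI impI)
    show "0 < e / (\<bar>C\<bar> + 1)" using e by simp
    fix y assume y: "norm (y - x) < e / (\<bar>C\<bar> + 1)"
    have "norm (f y - f x - A (y - x)) \<le> \<bar>C\<bar> * (norm (y - x) * norm (y - x))"
    proof -
      have "C * norm (y - x)^2 \<le> \<bar>C\<bar> * norm (y - x)^2" by (intro mult_right_mono) auto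
      then show ?thesis using q[of y] unfolding power2_eq_square by linarith
    qed
    also have "\<dots> \<le> (\<bar>C\<bar> + 1) * (norm (y - x) * norm (y - x))" by (simp add: mult_right_mono)
    also have "\<dots> \<le> (\<bar>C\<bar> + 1) * (e / (\<bar>C\<bar> + 1) * norm (y - x))"
      using y by (intro mult_left_mono mult_right_mono) auto
    also have "\<dots> = e * norm (y - x)" by simp
    finally show "norm (f y - f x - A (y - x)) \<le> e * norm (y - x)" .
  qed
qed

lemma vd_apply:
  "(J has_vector_derivative J') F \<Longrightarrow> ((\<lambda>s. blinfun_apply (J s) h) has_vector_derivative blinfun_apply J' h) F"
  by (rule bounded_linear.has_vector_derivative[OF blinfun.bounded_linear_left])

locale flowctx =
  fixes B :: "'a::euclidean_space meas \<Rightarrow> 'a \<Rightarrow> 'a" and CB T :: real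
    and \<xi> :: "real \<Rightarrow> 'a meas" and \<phi> :: "real \<Rightarrow> 'a \<Rightarrow> 'a"
  assumes st: "standing B CB" and Tpos: "0 < T" and wc: "wcont T \<xi>" and fl: "is_flow B T \<xi> \<phi>"
begin

definition K where "K = CB * (normT T \<xi> + 1)"

lemma CBpos: "0 < CB" using standing_CB[OF st] .

lemma Kpos: "0 < K"
  using CBpos normT_nonneg[OF wc] Tpos unfolding K_def by simp

lemma wle: "t \<in> {0..T} \<Longrightarrow> CB * (wnorm (\<xi> t) + 1) \<le> K"
  unfolding K_def using wcont_normT[OF wc] CBpos by simp

lemma Fb: "t \<in> {0..T} \<Longrightarrow> norm (B (\<xi> t) x) \<le> K"
  using standing_bounds(1)[OF st] wle order_trans by blast
lemma Fb1: "t \<in> {0..T} \<Longrightarrow> norm (sD (B (\<xi> t)) x) \<le> K"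
  using standing_bounds(2)[OF st] wle order_trans by blast
lemma Fb2: "t \<in> {0..T} \<Longrightarrow> norm (sD (sD (B (\<xi> t))) x) \<le> K"
  using standing_bounds(3)[OF st] wle order_trans by blast

lemma Fd: "(B \<zeta> has_derivative blinfun_apply (sD (B \<zeta>) x)) (at x)"
  using standing_Cb2[OF st] unfolding Cb2_def by (intro sD_works) auto

lemma DFd: "(sD (B \<zeta>) has_derivative blinfun_apply (sD (sD (B \<zeta>)) x)) (at x)"
  using standing_Cb2[OF st] unfolding Cb2_def by (intro sD_works) auto

lemma F_lip:
  assumes t: "t \<in> {0..T}"
  shows "norm (B (\<xi> t) x - B (\<xi> t) y) \<le> K * norm (x - y)"
proof (rule differentiable_bound[OF convex_UNIV _ _ UNIV_I UNIV_I])
  show "\<And>z. z \<in> UNIV \<Longrightarrow> (B (\<xi> t) has_derivative blinfun_apply (sD (B (\<xi> t)) z)) (at z within UNIV)"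
    using Fd by simp
  show "\<And>z. z \<in> UNIV \<Longrightarrow> onorm (blinfun_apply (sD (B (\<xi> t)) z)) \<le> K"
    using Fb1[OF t] by (simp add: norm_blinfun.rep_eq[symmetric])
qed

lemma DF_lip:
  assumes t: "t \<in> {0..T}"
  shows "norm (sD (B (\<xi> t)) x - sD (B (\<xi> t)) y) \<le> K * norm (x - y)"
proof (rule differentiable_bound[OF convex_UNIV _ _ UNIV_I UNIV_I])
  show "\<And>z. z \<in> UNIV \<Longrightarrow> (sD (B (\<xi> t)) has_derivative blinfun_apply (sD (sD (B (\<xi> t))) z)) (at z within UNIV)"
    using DFd by simp
  show "\<And>z. z \<in> UNIV \<Longrightarrow> onorm (blinfun_apply (sD (sD (B (\<xi> t))) z)) \<le> K"
    using Fb2[OF t] by (simp add: norm_blinfun.rep_eq[symmetric])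
qed

lemma F_lin:
  assumes t: "t \<in> {0..T}"
  shows "norm (B (\<xi> t) y - B (\<xi> t) x - sD (B (\<xi> t)) x (y - x)) \<le> K * norm (y - x)^2"
proof -
  have "norm (B (\<xi> t) y - B (\<xi> t) x - sD (B (\<xi> t)) x (y - x)) \<le> norm (y - x) * (K * norm (y - x))"
  proof (rule differentiable_bound_linearization[where S="closed_segment x y" and f'="\<lambda>z. blinfun_apply (sD (B (\<xi> t)) z)"])
    show "\<And>s. s \<in> {0..1} \<Longrightarrow> x + s *\<^sub>R (y - x) \<in> closed_segment x y"
    proof -
      fix s :: real assume s: "s \<in> {0..1}"
      have "x + s *\<^sub>R (y - x) = (1 - s) *\<^sub>R x + s *\<^sub>R y" by (simp add: algebra_simps)
      then show "x + s *\<^sub>R (y - x) \<in> closed_segment x y" using s unfolding in_segment(1) by (intro exI[of _ s]) auto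
    qed
    show "\<And>z. z \<in> closed_segment x y \<Longrightarrow> (B (\<xi> t) has_derivative blinfun_apply (sD (B (\<xi> t)) z)) (at z within closed_segment x y)"
      by (rule has_derivative_at_withinI[OF Fd])
    show "x \<in> closed_segment x y" by simp
    fix z assume z: "z \<in> closed_segment x y"
    have "onorm (blinfun_apply (sD (B (\<xi> t)) z) - blinfun_apply (sD (B (\<xi> t)) x)) = norm (sD (B (\<xi> t)) z - sD (B (\<xi> t)) x)"
    proof -
      have "blinfun_apply (sD (B (\<xi> t)) z) - blinfun_apply (sD (B (\<xi> t)) x) = blinfun_apply (sD (B (\<xi> t)) z - sD (B (\<xi> t)) x)"
        by (simp add: fun_eq_iff blinfun.diff_left)
      then show ?thesis by (simp only: norm_blinfun.rep_eq)
    qed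
    also have "\<dots> \<le> K * norm (z - x)" by (rule DF_lip[OF t])
    also have "\<dots> \<le> K * norm (y - x)"
      using segment_bound1[OF z] Kpos by (intro mult_left_mono) auto
    finally show "onorm (blinfun_apply (sD (B (\<xi> t)) z) - blinfun_apply (sD (B (\<xi> t)) x)) \<le> K * norm (y - x)" .
  qed
  moreover have "norm (y - x) * (K * norm (y - x)) = K * norm (y - x)^2" by (simp add: power2_eq_square)
  ultimately show ?thesis by simp
qed

lemma phi0: "\<phi> 0 x = x" using fl unfolding is_flow_def by simp

lemma phid: "t \<in> {0..T} \<Longrightarrow> ((\<lambda>s. \<phi> s x) has_vector_derivative B (\<xi> t) (\<phi> t x)) (at t within {0..T})"
  using fl unfolding is_flow_def by simp

lemma phic: "continuous_on {0..T} (\<lambda>s. \<phi> s x)"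
  using phid by (meson continuous_on_eq_continuous_within has_vector_derivative_continuous)

lemma phi_lip:
  assumes t: "t \<in> {0..T}"
  shows "norm (\<phi> t x - \<phi> t y) \<le> norm (x - y) * exp (K * t)"
proof (rule gc_exp[where f="\<lambda>s. \<phi> s x - \<phi> s y", OF less_imp_le[OF Kpos] _ _ _ t])
  show "\<And>s. s \<in> {0..T} \<Longrightarrow> ((\<lambda>s. \<phi> s x - \<phi> s y) has_vector_derivative B (\<xi> s) (\<phi> s x) - B (\<xi> s) (\<phi> s y)) (at s within {0..T})"
    by (intro derivative_intros phid)
  show "norm (\<phi> 0 x - \<phi> 0 y) \<le> norm (x - y)" by (simp add: phi0)
  show "\<And>s. s \<in> {0..T} \<Longrightarrow> norm (B (\<xi> s) (\<phi> s x) - B (\<xi> s) (\<phi> s y)) \<le> K * norm (\<phi> s x - \<phi> s y)"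
    by (rule F_lip)
qed

lemma Acont:
  assumes pc: "continuous_on {0..T} p"
  shows "continuous_on {0..T} (\<lambda>t. sD (B (\<xi> t)) (p t))"
  unfolding continuous_on_iff
proof (intro ballI allI impI)
  fix t0 e assume t0: "t0 \<in> {0..T}" and e: "(e::real) > 0"
  obtain d1 where d1: "d1 > 0" "\<forall>s\<in>{0..T}. \<bar>s - t0\<bar> < d1 \<longrightarrow> wnorm (\<xi> s - \<xi> t0) < e / (2 * CB)"
  proof -
    have "e / (2 * CB) > 0" using e CBpos by simp
    then show ?thesis using wc t0 that unfolding wcont_def by blast
  qed
  obtain d2 where d2: "d2 > 0" "\<forall>s\<in>{0..T}. dist s t0 < d2 \<longrightarrow> dist (p s) (p t0) < e / (2 * K)"
  proof -
    have "e / (2 * K) > 0" using e Kpos by simp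
    then show ?thesis using pc t0 that unfolding continuous_on_iff by blast
  qed
  show "\<exists>d>0. \<forall>s\<in>{0..T}. dist s t0 < d \<longrightarrow> dist (sD (B (\<xi> s)) (p s)) (sD (B (\<xi> t0)) (p t0)) < e"
  proof (intro exI[of _ "min d1 d2"] conjI ballI impI)
    show "0 < min d1 d2" using d1 d2 by simp
    fix s assume s: "s \<in> {0..T}" "dist s t0 < min d1 d2"
    have "norm (sD (B (\<xi> s)) (p s) - sD (B (\<xi> t0)) (p t0))
        \<le> norm (sD (B (\<xi> s)) (p s) - sD (B (\<xi> t0)) (p s)) + norm (sD (B (\<xi> t0)) (p s) - sD (B (\<xi> t0)) (p t0))"
      using norm_triangle_ineq[of "sD (B (\<xi> s)) (p s) - sD (B (\<xi> t0)) (p s)" "sD (B (\<xi> t0)) (p s) - sD (B (\<xi> t0)) (p t0)"] by simp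
    also have "\<dots> \<le> CB * wnorm (\<xi> s - \<xi> t0) + K * norm (p s - p t0)"
      using standing_lip1[OF st] DF_lip[OF t0] by (rule add_mono)
    also have "\<dots> < CB * (e / (2 * CB)) + K * (e / (2 * K))"
    proof (rule add_less_le_mono)
      have "wnorm (\<xi> s - \<xi> t0) < e / (2 * CB)" using d1(2) s by (auto simp: dist_real_def)
      then show "CB * wnorm (\<xi> s - \<xi> t0) < CB * (e / (2 * CB))"
        using CBpos by (rule mult_strict_left_mono)
      show "K * norm (p s - p t0) \<le> K * (e / (2 * K))"
        using d2(2) s Kpos by (intro mult_left_mono) (auto simp: dist_norm less_imp_le)
    qed
    also have "\<dots> = e" using CBpos Kpos by simp
    finally show "dist (sD (B (\<xi> s)) (p s)) (sD (B (\<xi> t0)) (p t0)) < e" by (simp add: dist_norm)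
  qed
qed

lemma jac_ex:
  "\<exists>J. J 0 = id_blinfun \<and> (\<forall>t\<in>{0..T}. (J has_vector_derivative sD (B (\<xi> t)) (\<phi> t x) o\<^sub>L J t) (at t within {0..T}))"
proof -
  have l: "linear (\<lambda>Z. sD (B (\<xi> t)) (\<phi> t x) o\<^sub>L Z)" for t
    using bounded_bilinear.bounded_linear_right[OF bounded_bilinear_blinfun_compose] bounded_linear.linear by blast
  have n: "norm (sD (B (\<xi> t)) (\<phi> t x) o\<^sub>L Z) \<le> K * norm Z" if "t \<in> {0..T}" for t Z
    using norm_blinfun_compose[of "sD (B (\<xi> t)) (\<phi> t x)" Z] Fb1[OF that, of "\<phi> t x"]
    by (meson mult_right_mono norm_ge_zero order_trans)
  have c: "continuous_on {0..T} g \<Longrightarrow> continuous_on {0..T} (\<lambda>t. sD (B (\<xi> t)) (\<phi> t x) o\<^sub>L g t)" for g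
    by (rule bounded_bilinear.continuous_on[OF bounded_bilinear_blinfun_compose Acont[OF phic]])
  have c0: "continuous_on {0..T} (\<lambda>t. 0::'a \<Rightarrow>\<^sub>L 'a)" by simp
  from linear_ode_exists[OF Tpos l less_imp_le[OF Kpos] n c c0, of id_blinfun]
  show ?thesis by simp
qed

end



context flowctx begin

definition Jac where
  "Jac x = (SOME J. J 0 = id_blinfun \<and> (\<forall>t\<in>{0..T}. (J has_vector_derivative sD (B (\<xi> t)) (\<phi> t x) o\<^sub>L J t) (at t within {0..T})))"

lemma Jac0: "Jac x 0 = id_blinfun"
  using someI_ex[OF jac_ex[of x]] unfolding Jac_def by blast

lemma Jacd: "t \<in> {0..T} \<Longrightarrow> (Jac x has_vector_derivative sD (B (\<xi> t)) (\<phi> t x) o\<^sub>L Jac x t) (at t within {0..T})"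
  using someI_ex[OF jac_ex[of x]] unfolding Jac_def by blast

lemma Jacc: "continuous_on {0..T} (Jac x)"
  using Jacd by (meson continuous_on_eq_continuous_within has_vector_derivative_continuous)

lemma A_comp_bnd: "t \<in> {0..T} \<Longrightarrow> norm (sD (B (\<xi> t)) z o\<^sub>L Z) \<le> K * norm Z"
  using norm_blinfun_compose[of "sD (B (\<xi> t)) z" Z] Fb1[of t z]
  by (meson mult_right_mono norm_ge_zero order_trans)

lemma A_app_bnd: "t \<in> {0..T} \<Longrightarrow> norm (sD (B (\<xi> t)) z v) \<le> K * norm v"
  using norm_blinfun[of "sD (B (\<xi> t)) z" v] Fb1[of t z]
  by (meson mult_right_mono norm_ge_zero order_trans)

lemma Jac_bnd:
  assumes t: "t \<in> {0..T}"
  shows "norm (Jac x t) \<le> exp (K * t)"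
proof -
  have "norm (Jac x t) \<le> 1 * exp (K * t)"
  proof (rule gc_exp[where f="Jac x" and c=1, OF less_imp_le[OF Kpos] Jacd _ _ t])
    show "norm (Jac x 0) \<le> 1" by (simp add: Jac0 norm_blinfun_id_le)
    show "\<And>s. s \<in> {0..T} \<Longrightarrow> norm (sD (B (\<xi> s)) (\<phi> s x) o\<^sub>L Jac x s) \<le> K * norm (Jac x s)"
      by (rule A_comp_bnd)
  qed auto
  then show ?thesis by simp
qed

lemma exp_KT: "t \<in> {0..T} \<Longrightarrow> exp (K * t) \<le> exp (K * T)"
  using Kpos by (simp add: mult_left_mono)

lemma phi_quad:
  assumes t: "t \<in> {0..T}"
  shows "norm (\<phi> t y - \<phi> t x - Jac x t (y - x)) \<le> (K * (exp (K * T) * norm (y - x))^2) * T * exp (K * T)"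
proof -
  define \<beta> where "\<beta> = K * (exp (K * T) * norm (y - x))^2"
  have \<beta>0: "0 \<le> \<beta>" unfolding \<beta>_def using Kpos by simp
  have "norm (\<phi> t y - \<phi> t x - Jac x t (y - x)) \<le> \<beta> * t * exp (K * t)"
  proof (rule gc_lin[where f="\<lambda>s. \<phi> s y - \<phi> s x - Jac x s (y - x)", OF less_imp_le[OF Kpos] \<beta>0 _ _ _ t])
    show "\<And>s. s \<in> {0..T} \<Longrightarrow> ((\<lambda>s. \<phi> s y - \<phi> s x - Jac x s (y - x)) has_vector_derivative
        B (\<xi> s) (\<phi> s y) - B (\<xi> s) (\<phi> s x) - (sD (B (\<xi> s)) (\<phi> s x) o\<^sub>L Jac x s) (y - x)) (at s within {0..T})"
      by (intro derivative_intros phid vd_apply Jacd)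
    show "norm (\<phi> 0 y - \<phi> 0 x - Jac x 0 (y - x)) = 0" by (simp add: phi0 Jac0)
    fix s assume s: "s \<in> {0..T}"
    define \<Delta> where "\<Delta> = \<phi> s y - \<phi> s x"
    have eq: "B (\<xi> s) (\<phi> s y) - B (\<xi> s) (\<phi> s x) - (sD (B (\<xi> s)) (\<phi> s x) o\<^sub>L Jac x s) (y - x)
      = (B (\<xi> s) (\<phi> s y) - B (\<xi> s) (\<phi> s x) - sD (B (\<xi> s)) (\<phi> s x) \<Delta>)
        + sD (B (\<xi> s)) (\<phi> s x) (\<phi> s y - \<phi> s x - Jac x s (y - x))"
      unfolding \<Delta>_def by (simp add: blinfun.bilinear_simps algebra_simps)
    have r: "norm (B (\<xi> s) (\<phi> s y) - B (\<xi> s) (\<phi> s x) - sD (B (\<xi> s)) (\<phi> s x) \<Delta>) \<le> K * norm \<Delta>^2"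
      unfolding \<Delta>_def by (rule F_lin[OF s])
    have d: "norm \<Delta> \<le> exp (K * T) * norm (y - x)"
      using phi_lip[OF s, of y x] exp_KT[OF s] unfolding \<Delta>_def
      by (smt (verit, best) mult.commute mult_left_mono norm_ge_zero)
    have "K * norm \<Delta>^2 \<le> \<beta>" unfolding \<beta>_def
      using d Kpos by (intro mult_left_mono power_mono) auto
    then show "norm (B (\<xi> s) (\<phi> s y) - B (\<xi> s) (\<phi> s x) - (sD (B (\<xi> s)) (\<phi> s x) o\<^sub>L Jac x s) (y - x))
        \<le> K * norm (\<phi> s y - \<phi> s x - Jac x s (y - x)) + \<beta>"
      unfolding eq using r A_app_bnd[OF s, of "\<phi> s x" "\<phi> s y - \<phi> s x - Jac x s (y - x)"]
      by (smt (verit) norm_triangle_ineq)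
  qed
  also have "\<dots> \<le> \<beta> * T * exp (K * T)"
    using t \<beta>0 exp_KT[OF t] by (intro mult_mono mult_left_mono) auto
  finally show ?thesis unfolding \<beta>_def .
qed

lemma phi_deriv:
  assumes t: "t \<in> {0..T}"
  shows "(\<phi> t has_derivative blinfun_apply (Jac x t)) (at x)"
proof (rule quad_has_derivative[OF blinfun.bounded_linear_right])
  fix y
  show "norm (\<phi> t y - \<phi> t x - Jac x t (y - x)) \<le> (K * exp (K * T)^2 * T * exp (K * T)) * norm (y - x)^2"
    using phi_quad[OF t, of y x] by (simp add: power_mult_distrib algebra_simps)
qed

lemma sD_phi: "t \<in> {0..T} \<Longrightarrow> sD (\<phi> t) x = Jac x t"
  by (rule sD_eq[OF phi_deriv])

lemma Jac_lip:
  assumes t: "t \<in> {0..T}"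
  shows "norm (Jac y t - Jac x t) \<le> norm (y - x) * (exp (K * t) * (exp (K * t) - 1))"
proof (rule gc_sq[where f="\<lambda>s. Jac y s - Jac x s", OF less_imp_le[OF Kpos] _ _ _ t])
  show "\<And>s. s \<in> {0..T} \<Longrightarrow> ((\<lambda>s. Jac y s - Jac x s) has_vector_derivative
      (sD (B (\<xi> s)) (\<phi> s y) o\<^sub>L Jac y s) - (sD (B (\<xi> s)) (\<phi> s x) o\<^sub>L Jac x s)) (at s within {0..T})"
  proof -
    fix s assume "s \<in> {0..T}"
    then show "((\<lambda>s. Jac y s - Jac x s) has_vector_derivative
      (sD (B (\<xi> s)) (\<phi> s y) o\<^sub>L Jac y s) - (sD (B (\<xi> s)) (\<phi> s x) o\<^sub>L Jac x s)) (at s within {0..T})"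
      using Jacd[of s y] Jacd[of s x] by (intro has_vector_derivative_diff)
  qed
  show "norm (Jac y 0 - Jac x 0) = 0" by (simp add: Jac0)
  fix s assume s: "s \<in> {0..T}"
  have eq: "(sD (B (\<xi> s)) (\<phi> s y) o\<^sub>L Jac y s) - (sD (B (\<xi> s)) (\<phi> s x) o\<^sub>L Jac x s)
     = (sD (B (\<xi> s)) (\<phi> s x) o\<^sub>L (Jac y s - Jac x s)) + ((sD (B (\<xi> s)) (\<phi> s y) - sD (B (\<xi> s)) (\<phi> s x)) o\<^sub>L Jac y s)"
    by (rule blinfun_eqI) (simp add: blinfun.diff_left blinfun.diff_right blinfun.add_left)
  have "norm ((sD (B (\<xi> s)) (\<phi> s y) - sD (B (\<xi> s)) (\<phi> s x)) o\<^sub>L Jac y s)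
      \<le> norm (sD (B (\<xi> s)) (\<phi> s y) - sD (B (\<xi> s)) (\<phi> s x)) * norm (Jac y s)"
    by (rule norm_blinfun_compose)
  also have "\<dots> \<le> (K * (norm (y - x) * exp (K * s))) * exp (K * s)"
  proof (rule mult_mono)
    show "norm (sD (B (\<xi> s)) (\<phi> s y) - sD (B (\<xi> s)) (\<phi> s x)) \<le> K * (norm (y - x) * exp (K * s))"
      using DF_lip[OF s, of "\<phi> s y" "\<phi> s x"] phi_lip[OF s, of y x] Kpos
      by (smt (verit) mult_left_mono)
  qed (use Jac_bnd[OF s] Kpos in auto)
  also have "\<dots> = norm (y - x) * (K * exp (2 * K * s))"
    by (simp add: algebra_simps flip: exp_add)
  finally have "norm ((sD (B (\<xi> s)) (\<phi> s y) - sD (B (\<xi> s)) (\<phi> s x)) o\<^sub>L Jac y s) \<le> norm (y - x) * (K * exp (2 * K * s))" .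
  then show "norm ((sD (B (\<xi> s)) (\<phi> s y) o\<^sub>L Jac y s) - (sD (B (\<xi> s)) (\<phi> s x) o\<^sub>L Jac x s))
      \<le> K * norm (Jac y s - Jac x s) + norm (y - x) * (K * exp (2 * K * s))"
    unfolding eq using A_comp_bnd[OF s, of "\<phi> s x" "Jac y s - Jac x s"]
    by (smt (verit) norm_triangle_ineq)
qed

end



context flowctx begin

lemma G_cont: "continuous_on ({0..T} \<times> UNIV) (\<lambda>x. sD (sD (B (\<xi> (fst x)))) (snd x))"
  unfolding continuous_on_iff
proof (intro ballI allI impI)
  fix x and e :: real assume x: "x \<in> {0..T} \<times> (UNIV :: 'a set)" and e: "e > 0"
  obtain t0 z0 where x0: "x = (t0, z0)" by (cases x)
  have t0: "t0 \<in> {0..T}" using x x0 by auto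
  have e2: "e / 2 > 0" using e by simp
  obtain d1 where d1: "d1 > 0" "\<forall>\<xi>'. wnorm (\<xi>' - \<xi> t0) < d1 \<longrightarrow> (\<forall>z. norm (sD (sD (B \<xi>')) z - sD (sD (B (\<xi> t0))) z) < e / 2)"
    using standing_cont2[OF st e2] by blast
  obtain d2 where d2: "d2 > 0" "\<forall>s\<in>{0..T}. \<bar>s - t0\<bar> < d2 \<longrightarrow> wnorm (\<xi> s - \<xi> t0) < d1"
    using wc t0 d1(1) unfolding wcont_def by blast
  have c: "continuous_on UNIV (sD (sD (B (\<xi> t0))))"
    using standing_Cb2[OF st] unfolding Cb2_def by blast
  obtain d3 where d3: "d3 > 0" "\<forall>z. dist z z0 < d3 \<longrightarrow> dist (sD (sD (B (\<xi> t0))) z) (sD (sD (B (\<xi> t0))) z0) < e / 2"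
    using c e2 unfolding continuous_on_iff by blast
  show "\<exists>d>0. \<forall>x'\<in>{0..T} \<times> UNIV. dist x' x < d \<longrightarrow>
      dist (sD (sD (B (\<xi> (fst x'))))  (snd x')) (sD (sD (B (\<xi> (fst x)))) (snd x)) < e"
  proof (intro exI[of _ "min d2 d3"] conjI ballI impI)
    show "0 < min d2 d3" using d2 d3 by simp
    fix x' assume x': "x' \<in> {0..T} \<times> (UNIV :: 'a set)" "dist x' x < min d2 d3"
    obtain t z where xt: "x' = (t, z)" by (cases x')
    have t: "t \<in> {0..T}" using x' xt by auto
    have dt: "\<bar>t - t0\<bar> < d2" using dist_fst_le[of x' x] x' xt x0 by (simp add: dist_real_def)
    have dz: "dist z z0 < d3" using dist_snd_le[of x' x] x' xt x0 by simp
    have a: "norm (sD (sD (B (\<xi> t))) z - sD (sD (B (\<xi> t0))) z) < e / 2"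
      using d1(2) d2(2) t dt by blast
    have b: "norm (sD (sD (B (\<xi> t0))) z - sD (sD (B (\<xi> t0))) z0) < e / 2"
      using d3(2) dz by (simp add: dist_norm)
    have "norm (sD (sD (B (\<xi> t))) z - sD (sD (B (\<xi> t0))) z0)
        \<le> norm (sD (sD (B (\<xi> t))) z - sD (sD (B (\<xi> t0))) z) + norm (sD (sD (B (\<xi> t0))) z - sD (sD (B (\<xi> t0))) z0)"
      using norm_triangle_ineq[of "sD (sD (B (\<xi> t))) z - sD (sD (B (\<xi> t0))) z" "sD (sD (B (\<xi> t0))) z - sD (sD (B (\<xi> t0))) z0"]
      by simp
    then show "dist (sD (sD (B (\<xi> (fst x'))))  (snd x')) (sD (sD (B (\<xi> (fst x)))) (snd x)) < e"
      using a b xt x0 by (simp add: dist_norm)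
  qed
qed

lemma G_cont_path:
  assumes pc: "continuous_on {0..T} p"
  shows "continuous_on {0..T} (\<lambda>t. sD (sD (B (\<xi> t))) (p t))"
proof -
  have "continuous_on {0..T} (\<lambda>t. (t, p t))" by (intro continuous_intros pc)
  moreover have "(\<lambda>t. (t, p t)) ` {0..T} \<subseteq> {0..T} \<times> UNIV" by auto
  ultimately have "continuous_on {0..T} ((\<lambda>x. sD (sD (B (\<xi> (fst x)))) (snd x)) \<circ> (\<lambda>t. (t, p t)))"
    by (intro continuous_on_compose continuous_on_subset[OF G_cont])
  then show ?thesis by (simp add: o_def)
qed

lemma unif_mod:
  assumes pc: "continuous_on {0..T} p" and e: "e > 0"
  shows "\<exists>d>0. \<forall>t\<in>{0..T}. \<forall>z. norm (z - p t) < d \<longrightarrow>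
      norm (sD (sD (B (\<xi> t))) z - sD (sD (B (\<xi> t))) (p t)) < e"
proof -
  define S where "S = (\<lambda>x. (fst x, p (fst x) + snd x)) ` ({0..T} \<times> cball (0::'a) 1)"
  have cm: "continuous_on ({0..T} \<times> cball (0::'a) 1) (\<lambda>x. (fst x, p (fst x) + snd x))"
  proof -
    have "continuous_on ({0..T} \<times> cball (0::'a) 1) (\<lambda>x. p (fst x))"
      by (rule continuous_on_compose2[OF pc continuous_on_fst]) auto
    then show ?thesis by (intro continuous_intros)
  qed
  have cS: "compact S" unfolding S_def
    by (intro compact_continuous_image cm compact_Times compact_Icc compact_cball)
  have sub: "S \<subseteq> {0..T} \<times> UNIV" unfolding S_def by auto
  have "uniformly_continuous_on S (\<lambda>x. sD (sD (B (\<xi> (fst x)))) (snd x))"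
    by (rule compact_uniformly_continuous[OF continuous_on_subset[OF G_cont sub] cS])
  then obtain d where d: "d > 0" "\<forall>x\<in>S. \<forall>x'\<in>S. dist x' x < d \<longrightarrow>
      dist (sD (sD (B (\<xi> (fst x'))))  (snd x')) (sD (sD (B (\<xi> (fst x)))) (snd x)) < e"
    using e unfolding uniformly_continuous_on_def by blast
  show ?thesis
  proof (intro exI[of _ "min d 1"] conjI ballI allI impI)
    show "0 < min d 1" using d by simp
    fix t z assume t: "t \<in> {0..T}" and z: "norm (z - p t) < min d 1"
    have m1: "(t, z) \<in> S" unfolding S_def
      using t z by (intro image_eqI[of _ _ "(t, z - p t)"]) (auto simp: dist_norm norm_minus_commute)
    have m2: "(t, p t) \<in> S" unfolding S_def
      using t by (intro image_eqI[of _ _ "(t, 0)"]) auto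
    have "dist (t, z) (t, p t) < d" using z by (simp add: dist_Pair_Pair dist_norm)
    then show "norm (sD (sD (B (\<xi> t))) z - sD (sD (B (\<xi> t))) (p t)) < e"
      using d(2) m1 m2 by (force simp: dist_norm)
  qed
qed

end



definition lcomp :: "('b::real_normed_vector \<Rightarrow>\<^sub>L 'c::real_normed_vector) \<Rightarrow> (('a::real_normed_vector \<Rightarrow>\<^sub>L 'b) \<Rightarrow>\<^sub>L ('a \<Rightarrow>\<^sub>L 'c))"
  where "lcomp A = Blinfun (\<lambda>Z. A o\<^sub>L Z)"

definition rcomp :: "('a::real_normed_vector \<Rightarrow>\<^sub>L 'b::real_normed_vector) \<Rightarrow> (('b \<Rightarrow>\<^sub>L 'c::real_normed_vector) \<Rightarrow>\<^sub>L ('a \<Rightarrow>\<^sub>L 'c))"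
  where "rcomp J = Blinfun (\<lambda>X. X o\<^sub>L J)"

lemma lcomp_apply[simp]: "blinfun_apply (lcomp A) Z = A o\<^sub>L Z"
  unfolding lcomp_def
  by (simp add: bounded_linear_Blinfun_apply[OF bounded_bilinear.bounded_linear_right[OF bounded_bilinear_blinfun_compose]])

lemma rcomp_apply[simp]: "blinfun_apply (rcomp J) X = X o\<^sub>L J"
  unfolding rcomp_def
  by (simp add: bounded_linear_Blinfun_apply[OF bounded_bilinear.bounded_linear_left[OF bounded_bilinear_blinfun_compose]])

lemma norm_lcomp: "norm (lcomp A) \<le> norm A"
  by (rule norm_blinfun_bound[OF norm_ge_zero]) (simp add: norm_blinfun_compose)

lemma norm_rcomp: "norm (rcomp J) \<le> norm J"
  by (rule norm_blinfun_bound[OF norm_ge_zero]) (simp add: norm_blinfun_compose mult.commute)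

lemma bounded_linear_lcomp: "bounded_linear lcomp"
  by (rule bounded_linear_intro[where K=1])
    (auto intro!: blinfun_eqI simp: blinfun.add_left blinfun.scaleR_left norm_lcomp
      bounded_bilinear.add_left[OF bounded_bilinear_blinfun_compose]
      bounded_bilinear.scaleR_left[OF bounded_bilinear_blinfun_compose])

lemma bounded_linear_rcomp: "bounded_linear rcomp"
  by (rule bounded_linear_intro[where K=1])
    (auto intro!: blinfun_eqI simp: blinfun.add_left blinfun.scaleR_left norm_rcomp
      bounded_bilinear.add_right[OF bounded_bilinear_blinfun_compose]
      bounded_bilinear.scaleR_right[OF bounded_bilinear_blinfun_compose])



context flowctx begin

definition hc where
  "hc y t = rcomp (Jac y t) o\<^sub>L sD (sD (B (\<xi> t))) (\<phi> t y) o\<^sub>L Jac y t"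

lemma hc_apply: "blinfun_apply (hc y t) h = sD (sD (B (\<xi> t))) (\<phi> t y) (Jac y t h) o\<^sub>L Jac y t"
  unfolding hc_def by simp

lemma hess_ex:
  "\<exists>Z. Z 0 = 0 \<and> (\<forall>t\<in>{0..T}. (Z has_vector_derivative ((lcomp (sD (B (\<xi> t)) (\<phi> t y)) o\<^sub>L Z t) + hc y t)) (at t within {0..T}))"
proof -
  have l: "linear (\<lambda>Z::'a \<Rightarrow>\<^sub>L 'a \<Rightarrow>\<^sub>L 'a. lcomp (sD (B (\<xi> t)) (\<phi> t y)) o\<^sub>L Z)" for t
    using bounded_bilinear.bounded_linear_right[OF bounded_bilinear_blinfun_compose] bounded_linear.linear by blast
  have n: "norm (lcomp (sD (B (\<xi> t)) (\<phi> t y)) o\<^sub>L Z) \<le> K * norm Z" if "t \<in> {0..T}" for t and Z :: "'a \<Rightarrow>\<^sub>L 'a \<Rightarrow>\<^sub>L 'a"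
  proof -
    have a: "norm (lcomp (sD (B (\<xi> t)) (\<phi> t y)) o\<^sub>L Z) \<le> norm (lcomp (sD (B (\<xi> t)) (\<phi> t y)) :: ('a \<Rightarrow>\<^sub>L 'a) \<Rightarrow>\<^sub>L ('a \<Rightarrow>\<^sub>L 'a)) * norm Z"
      by (rule norm_blinfun_compose)
    have b: "norm (lcomp (sD (B (\<xi> t)) (\<phi> t y)) :: ('a \<Rightarrow>\<^sub>L 'a) \<Rightarrow>\<^sub>L ('a \<Rightarrow>\<^sub>L 'a)) \<le> K"
      using norm_lcomp[where 'a='a, of "sD (B (\<xi> t)) (\<phi> t y)"] Fb1[OF that, of "\<phi> t y"] by linarith
    show ?thesis using a b by (meson mult_right_mono norm_ge_zero order_trans)
  qed
  have lc: "continuous_on {0..T} (\<lambda>t. lcomp (sD (B (\<xi> t)) (\<phi> t y)) :: ('a \<Rightarrow>\<^sub>L 'a) \<Rightarrow>\<^sub>L ('a \<Rightarrow>\<^sub>L 'a))"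
    by (rule bounded_linear.continuous_on[OF bounded_linear_lcomp Acont[OF phic]])
  have c: "continuous_on {0..T} g \<Longrightarrow> continuous_on {0..T} (\<lambda>t. lcomp (sD (B (\<xi> t)) (\<phi> t y)) o\<^sub>L g t)" for g :: "real \<Rightarrow> 'a \<Rightarrow>\<^sub>L 'a \<Rightarrow>\<^sub>L 'a"
    by (rule bounded_bilinear.continuous_on[OF bounded_bilinear_blinfun_compose lc])
  have rc: "continuous_on {0..T} (\<lambda>t. rcomp (Jac y t))"
    by (rule bounded_linear.continuous_on[OF bounded_linear_rcomp Jacc])
  have c0: "continuous_on {0..T} (hc y)" unfolding hc_def
    by (intro bounded_bilinear.continuous_on[OF bounded_bilinear_blinfun_compose] rc Jacc G_cont_path phic)
  from linear_ode_exists[OF Tpos l less_imp_le[OF Kpos] n c c0, of 0]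
  show ?thesis by simp
qed

definition Hs where
  "Hs y = (SOME Z. Z 0 = 0 \<and> (\<forall>t\<in>{0..T}. (Z has_vector_derivative ((lcomp (sD (B (\<xi> t)) (\<phi> t y)) o\<^sub>L Z t) + hc y t)) (at t within {0..T})))"

lemma Hs0: "Hs y 0 = 0"
  using someI_ex[OF hess_ex[of y]] unfolding Hs_def by blast

lemma Hsd: "t \<in> {0..T} \<Longrightarrow> (Hs y has_vector_derivative ((lcomp (sD (B (\<xi> t)) (\<phi> t y)) o\<^sub>L Hs y t) + hc y t)) (at t within {0..T})"
  using someI_ex[OF hess_ex[of y]] unfolding Hs_def by blast

end



context flowctx begin

lemma Jac_err_eq:
  fixes A A' J J' H :: "'a \<Rightarrow>\<^sub>L 'a" and D :: "'a \<Rightarrow>\<^sub>L 'a \<Rightarrow>\<^sub>L 'a" and \<Delta> h :: 'a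
  shows "(A' o\<^sub>L J') - (A o\<^sub>L J) - ((A o\<^sub>L H) + (D (J h) o\<^sub>L J))
    = (A o\<^sub>L (J' - J - H)) + ((A' - A - D \<Delta>) o\<^sub>L J') + (D (\<Delta> - J h) o\<^sub>L J') + (D (J h) o\<^sub>L (J' - J))"
  by (rule blinfun_eqI) (simp add: blinfun.bilinear_simps algebra_simps)

lemma lin_rem:
  assumes s: "s \<in> {0..T}" and om: "\<And>z. norm (z - a) \<le> norm (b - a) \<Longrightarrow> norm (sD (sD (B (\<xi> s))) z - sD (sD (B (\<xi> s))) a) \<le> \<omega>"
  shows "norm (sD (B (\<xi> s)) b - sD (B (\<xi> s)) a - sD (sD (B (\<xi> s))) a (b - a)) \<le> norm (b - a) * \<omega>"
proof (rule differentiable_bound_linearization[where S="closed_segment a b" and f'="\<lambda>z. blinfun_apply (sD (sD (B (\<xi> s))) z)"])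
  show "\<And>u. u \<in> {0..1} \<Longrightarrow> a + u *\<^sub>R (b - a) \<in> closed_segment a b"
  proof -
    fix u :: real assume u: "u \<in> {0..1}"
    have "a + u *\<^sub>R (b - a) = (1 - u) *\<^sub>R a + u *\<^sub>R b" by (simp add: algebra_simps)
    then show "a + u *\<^sub>R (b - a) \<in> closed_segment a b" using u unfolding in_segment(1) by (intro exI[of _ u]) auto
  qed
  show "\<And>z. z \<in> closed_segment a b \<Longrightarrow> (sD (B (\<xi> s)) has_derivative blinfun_apply (sD (sD (B (\<xi> s))) z)) (at z within closed_segment a b)"
    by (rule has_derivative_at_withinI[OF DFd])
  show "a \<in> closed_segment a b" by simp
  fix z assume z: "z \<in> closed_segment a b"
  have "blinfun_apply (sD (sD (B (\<xi> s))) z) - blinfun_apply (sD (sD (B (\<xi> s))) a) = blinfun_apply (sD (sD (B (\<xi> s))) z - sD (sD (B (\<xi> s))) a)"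
    by (simp add: fun_eq_iff blinfun.diff_left)
  then have "onorm (blinfun_apply (sD (sD (B (\<xi> s))) z) - blinfun_apply (sD (sD (B (\<xi> s))) a)) = norm (sD (sD (B (\<xi> s))) z - sD (sD (B (\<xi> s))) a)"
    by (simp only: norm_blinfun.rep_eq)
  also have "\<dots> \<le> \<omega>" using om[OF segment_bound1[OF z]] .
  finally show "onorm (blinfun_apply (sD (sD (B (\<xi> s))) z) - blinfun_apply (sD (sD (B (\<xi> s))) a)) \<le> \<omega>" .
qed

end



lemma comp_le:
  assumes "norm X \<le> a" "norm Y \<le> b"
  shows "norm (X o\<^sub>L Y) \<le> a * b"
proof -
  have "norm (X o\<^sub>L Y) \<le> norm X * norm Y" by (rule norm_blinfun_compose)
  also have "\<dots> \<le> a * b"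
  proof (rule mult_mono)
    show "0 \<le> a" using assms(1) norm_ge_zero[of X] by linarith
  qed (use assms in auto)
  finally show ?thesis .
qed

context flowctx begin

lemma Jac_bndE: "s \<in> {0..T} \<Longrightarrow> norm (Jac y s) \<le> exp (K * T)"
  using Jac_bnd[of s y] exp_KT[of s] by linarith

lemma D_app: "s \<in> {0..T} \<Longrightarrow> norm (blinfun_apply (sD (sD (B (\<xi> s))) z) v) \<le> K * norm v"
proof -
  assume s: "s \<in> {0..T}"
  have "norm (sD (sD (B (\<xi> s))) z) * norm v \<le> K * norm v" using Fb2[OF s, of z] by (intro mult_right_mono) auto
  then show ?thesis using norm_blinfun[of "sD (sD (B (\<xi> s))) z" v] by linarith
qed

lemma E_ge1: "1 \<le> exp (K * T)"
  using Kpos Tpos by simp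

lemma Jac_deriv:
  assumes t: "t \<in> {0..T}"
  shows "((\<lambda>y. Jac y t) has_derivative blinfun_apply (Hs x t)) (at x)"
  unfolding has_derivative_at_alt
proof (intro conjI allI impI)
  show "bounded_linear (blinfun_apply (Hs x t))" by (rule blinfun.bounded_linear_right)
  fix \<epsilon> :: real assume \<epsilon>: "\<epsilon> > 0"
  define E where "E = exp (K * T)"
  have E1: "1 \<le> E" unfolding E_def by (rule E_ge1)
  define C3 where "C3 = K * K * E^4 * T + K * E^3"
  have C3pos: "0 \<le> C3" unfolding C3_def using Kpos Tpos E1 by simp
  define \<omega> where "\<omega> = \<epsilon> / (2 * T * E^3)"
  have \<omega>pos: "\<omega> > 0" unfolding \<omega>_def using \<epsilon> Tpos E1 by simp
  obtain \<delta> where \<delta>: "\<delta> > 0" and md: "\<forall>s\<in>{0..T}. \<forall>z. norm (z - \<phi> s x) < \<delta> \<longrightarrow>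
      norm (sD (sD (B (\<xi> s))) z - sD (sD (B (\<xi> s))) (\<phi> s x)) < \<omega>"
    using unif_mod[OF phic \<omega>pos] by blast
  define d where "d = min (\<delta> / E) (\<epsilon> / (2 * T * E * C3 + 1))"
  have dpos: "d > 0" unfolding d_def using \<delta> E1 \<epsilon> C3pos Tpos by (simp add: add_nonneg_pos)
  show "\<exists>d>0. \<forall>y. norm (y - x) < d \<longrightarrow> norm (Jac y t - Jac x t - blinfun_apply (Hs x t) (y - x)) \<le> \<epsilon> * norm (y - x)"
  proof (intro exI[of _ d] conjI allI impI dpos)
    fix y assume y: "norm (y - x) < d"
    define h where "h = y - x"
    have hd: "norm h < d" using y unfolding h_def .
    define \<beta> where "\<beta> = E^2 * \<omega> * norm h + C3 * norm h^2"
    have \<beta>0: "0 \<le> \<beta>" unfolding \<beta>_def using \<omega>pos C3pos by simp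
    have "norm (Jac y t - Jac x t - blinfun_apply (Hs x t) h) \<le> \<beta> * t * exp (K * t)"
    proof (rule gc_lin[where f="\<lambda>s. Jac y s - Jac x s - blinfun_apply (Hs x s) h", OF less_imp_le[OF Kpos] \<beta>0 _ _ _ t])
      fix s assume s: "s \<in> {0..T}"
      show "((\<lambda>s. Jac y s - Jac x s - blinfun_apply (Hs x s) h) has_vector_derivative
          (sD (B (\<xi> s)) (\<phi> s y) o\<^sub>L Jac y s) - (sD (B (\<xi> s)) (\<phi> s x) o\<^sub>L Jac x s)
          - blinfun_apply ((lcomp (sD (B (\<xi> s)) (\<phi> s x)) o\<^sub>L Hs x s) + hc x s) h) (at s within {0..T})"
        using Jacd[OF s, of y] Jacd[OF s, of x] vd_apply[OF Hsd[OF s, of x], of h]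
        by (intro has_vector_derivative_diff)
      define A where "A = sD (B (\<xi> s)) (\<phi> s x)"
      define A' where "A' = sD (B (\<xi> s)) (\<phi> s y)"
      define J where "J = Jac x s"
      define J' where "J' = Jac y s"
      define D where "D = sD (sD (B (\<xi> s))) (\<phi> s x)"
      define H where "H = blinfun_apply (Hs x s) h"
      define \<Delta> where "\<Delta> = \<phi> s y - \<phi> s x"
      have app: "blinfun_apply ((lcomp A o\<^sub>L Hs x s) + hc x s) h = (A o\<^sub>L H) + (D (J h) o\<^sub>L J)"
        unfolding H_def D_def J_def A_def by (simp add: blinfun.add_left hc_apply)
      have eq: "(A' o\<^sub>L J') - (A o\<^sub>L J) - blinfun_apply ((lcomp A o\<^sub>L Hs x s) + hc x s) h
          = (A o\<^sub>L (J' - J - H)) + ((A' - A - D \<Delta>) o\<^sub>L J') + (D (\<Delta> - J h) o\<^sub>L J') + (D (J h) o\<^sub>L (J' - J))"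
        unfolding app by (rule Jac_err_eq)
      have JE: "norm J' \<le> E" "norm J \<le> E" unfolding J_def J'_def E_def using Jac_bndE[OF s] by auto
      have Dn: "norm \<Delta> \<le> E * norm h"
      proof -
        have "norm (y - x) * exp (K * s) \<le> norm (y - x) * exp (K * T)"
          using exp_KT[OF s] by (intro mult_left_mono) auto
        then show ?thesis using phi_lip[OF s, of y x] unfolding \<Delta>_def h_def E_def
          by (simp add: mult.commute)
      qed
      have Dd: "norm \<Delta> < \<delta>"
      proof -
        have "E * norm h < E * (\<delta> / E)" using hd E1 unfolding d_def by (intro mult_strict_left_mono) auto
        then show ?thesis using Dn E1 by simp
      qed
      have n1: "norm (A o\<^sub>L (J' - J - H)) \<le> K * norm (J' - J - H)"
        unfolding A_def by (rule A_comp_bnd[OF s])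
      have n2: "norm ((A' - A - D \<Delta>) o\<^sub>L J') \<le> (norm \<Delta> * \<omega>) * E"
      proof (rule comp_le[OF _ JE(1)])
        have "norm (A' - A - D \<Delta>) \<le> norm (\<phi> s y - \<phi> s x) * \<omega>"
          unfolding A'_def A_def D_def \<Delta>_def
        proof (rule lin_rem[OF s])
          fix z assume "norm (z - \<phi> s x) \<le> norm (\<phi> s y - \<phi> s x)"
          then have "norm (z - \<phi> s x) < \<delta>" using Dd unfolding \<Delta>_def by simp
          then show "norm (sD (sD (B (\<xi> s))) z - sD (sD (B (\<xi> s))) (\<phi> s x)) \<le> \<omega>"
            using md s by (auto intro: less_imp_le)
        qed
        then show "norm (A' - A - D \<Delta>) \<le> norm \<Delta> * \<omega>" unfolding \<Delta>_def .
      qed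
      have n3: "norm (D (\<Delta> - J h) o\<^sub>L J') \<le> (K * ((K * (E * norm h)^2) * T * E)) * E"
      proof (rule comp_le[OF _ JE(1)])
        have "norm (\<Delta> - J h) \<le> (K * (E * norm h)^2) * T * E"
          using phi_quad[OF s, of y x] unfolding \<Delta>_def J_def h_def E_def by simp
        then have "K * norm (\<Delta> - J h) \<le> K * ((K * (E * norm h)^2) * T * E)"
          using Kpos by (intro mult_left_mono) auto
        then show "norm (D (\<Delta> - J h)) \<le> K * ((K * (E * norm h)^2) * T * E)"
          using D_app[OF s, of "\<phi> s x" "\<Delta> - J h"] unfolding D_def by linarith
      qed
      have n4: "norm (D (J h) o\<^sub>L (J' - J)) \<le> (K * (E * norm h)) * (norm h * (E * E))"
      proof (rule comp_le)
        have "norm (J h) \<le> E * norm h"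
        proof -
          have "norm J * norm h \<le> E * norm h" using JE(2) by (intro mult_right_mono) auto
          then show ?thesis using norm_blinfun[of J h] by linarith
        qed
        then have "K * norm (J h) \<le> K * (E * norm h)" using Kpos by (intro mult_left_mono) auto
        then show "norm (D (J h)) \<le> K * (E * norm h)"
          using D_app[OF s, of "\<phi> s x" "J h"] unfolding D_def by linarith
        have ee: "exp (K * s) * (exp (K * s) - 1) \<le> E * E"
        proof -
          have "exp (K * s) \<le> E" unfolding E_def by (rule exp_KT[OF s])
          moreover have "exp (K * s) - 1 \<le> E" using \<open>exp (K * s) \<le> E\<close> by simp
          moreover have "0 \<le> K * s" using Kpos s by simp
          ultimately show ?thesis using E1 by (intro mult_mono) auto
        qed
        show "norm (J' - J) \<le> norm h * (E * E)"
          using Jac_lip[OF s, of y x] mult_left_mono[OF ee norm_ge_zero[of h]] unfolding J'_def J_def h_def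
          by linarith
      qed
      have tot: "(norm \<Delta> * \<omega>) * E + (K * ((K * (E * norm h)^2) * T * E)) * E + (K * (E * norm h)) * (norm h * (E * E)) \<le> \<beta>"
      proof -
        have "(norm \<Delta> * \<omega>) * E \<le> ((E * norm h) * \<omega>) * E"
          using Dn \<omega>pos E1 by (intro mult_right_mono) auto
        moreover have "((E * norm h) * \<omega>) * E + (K * ((K * (E * norm h)^2) * T * E)) * E + (K * (E * norm h)) * (norm h * (E * E)) = \<beta>"
          unfolding \<beta>_def C3_def by (simp add: power2_eq_square power3_eq_cube power4_eq_xxxx algebra_simps)
        ultimately show ?thesis by linarith
      qed
      show "norm ((sD (B (\<xi> s)) (\<phi> s y) o\<^sub>L Jac y s) - (sD (B (\<xi> s)) (\<phi> s x) o\<^sub>L Jac x s)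
          - blinfun_apply ((lcomp (sD (B (\<xi> s)) (\<phi> s x)) o\<^sub>L Hs x s) + hc x s) h)
          \<le> K * norm (Jac y s - Jac x s - blinfun_apply (Hs x s) h) + \<beta>"
      proof -
        have tri: "norm (a + b + c + e) \<le> norm a + norm b + norm c + norm e" for a b c e :: "'a \<Rightarrow>\<^sub>L 'a"
          using norm_triangle_ineq[of "a + b + c" e] norm_triangle_ineq[of "a + b" c] norm_triangle_ineq[of a b]
          by linarith
        have "norm ((A' o\<^sub>L J') - (A o\<^sub>L J) - blinfun_apply ((lcomp A o\<^sub>L Hs x s) + hc x s) h)
            \<le> K * norm (J' - J - H) + \<beta>"
          unfolding eq using tri[of "A o\<^sub>L (J' - J - H)" "(A' - A - D \<Delta>) o\<^sub>L J'" "D (\<Delta> - J h) o\<^sub>L J'" "D (J h) o\<^sub>L (J' - J)"]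
            n1 n2 n3 n4 tot by linarith
        then show ?thesis unfolding A_def A'_def J_def J'_def H_def .
      qed
    next
      show "norm (Jac y 0 - Jac x 0 - blinfun_apply (Hs x 0) h) = 0" by (simp add: Jac0 Hs0)
    qed
    also have "\<dots> \<le> \<beta> * T * E"
      using t \<beta>0 exp_KT[OF t] unfolding E_def by (intro mult_mono mult_left_mono) auto
    also have "\<dots> = (T * E^3 * \<omega>) * norm h + (T * E * C3 * norm h) * norm h"
      unfolding \<beta>_def by (simp add: power2_eq_square power3_eq_cube algebra_simps)
    also have "\<dots> \<le> (\<epsilon> / 2) * norm h + (\<epsilon> / 2) * norm h"
    proof (rule add_mono)
      have "T * E^3 * \<omega> = \<epsilon> / 2" unfolding \<omega>_def using Tpos E1 by (simp add: field_simps)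
      then show "(T * E^3 * \<omega>) * norm h \<le> (\<epsilon> / 2) * norm h" by (simp only: order_refl)
      have pp: "0 < 2 * T * E * C3 + 1"
        using C3pos Tpos E1 by (intro add_nonneg_pos mult_nonneg_nonneg) auto
      have "(2 * T * E * C3 + 1) * norm h < (2 * T * E * C3 + 1) * (\<epsilon> / (2 * T * E * C3 + 1))"
        using hd pp unfolding d_def by (intro mult_strict_left_mono) auto
      also have "\<dots> = \<epsilon>" using pp by simp
      finally have X: "(2 * T * E * C3 + 1) * norm h < \<epsilon>" .
      moreover have "(2 * T * E * C3 + 1) * norm h = 2 * (T * E * C3 * norm h) + norm h" by (simp add: algebra_simps)
      ultimately have "2 * (T * E * C3 * norm h) \<le> \<epsilon>" using norm_ge_zero[of h] by linarith
      then show "(T * E * C3 * norm h) * norm h \<le> (\<epsilon> / 2) * norm h" by (intro mult_right_mono) auto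
    qed
    also have "\<dots> = \<epsilon> * norm h" by simp
    finally show "norm (Jac y t - Jac x t - blinfun_apply (Hs x t) (y - x)) \<le> \<epsilon> * norm (y - x)"
      unfolding h_def .
  qed
qed

end



lemma exp_minus_one_le: "0 \<le> (a::real) \<Longrightarrow> exp a - 1 \<le> a * exp a"
proof -
  assume a: "0 \<le> a"
  have "1 + (- a) \<le> exp (- a)" using exp_ge_add_one_self[of "- a"] by (simp add: algebra_simps)
  then have "(1 - a) * exp a \<le> exp (- a) * exp a" by (intro mult_right_mono) auto
  also have "\<dots> = 1" by (simp flip: exp_add)
  finally show ?thesis by (simp add: algebra_simps)
qed

locale flow2 = a: flowctx B CB T \<xi> \<phi> + b: flowctx B CB T \<xi>' \<phi>'
  for B :: "'a::euclidean_space meas \<Rightarrow> 'a \<Rightarrow> 'a" and CB T \<xi> \<phi> \<xi>' \<phi>'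
begin

definition dd where "dd = normT T (\<lambda>s. \<xi> s - \<xi>' s)"

lemma dd_ge: "s \<in> {0..T} \<Longrightarrow> wnorm (\<xi> s - \<xi>' s) \<le> dd"
  unfolding dd_def using wcont_normT[OF wcont_diff[OF a.wc b.wc]] by simp

lemma dd_nonneg: "0 \<le> dd"
  using dd_ge[of 0] wnorm_nonneg[of "\<xi> 0 - \<xi>' 0"] a.Tpos by simp

lemma phi_diff:
  assumes t: "t \<in> {0..T}"
  shows "norm (\<phi> t x - \<phi>' t x) \<le> CB * dd * T * exp (a.K * T)"
proof -
  have b0: "0 \<le> CB * dd" using a.CBpos dd_nonneg by simp
  have "norm (\<phi> t x - \<phi>' t x) \<le> (CB * dd) * t * exp (a.K * t)"
  proof (rule gc_lin[where f="\<lambda>s. \<phi> s x - \<phi>' s x", OF less_imp_le[OF a.Kpos] b0 _ _ _ t])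
    show "\<And>s. s \<in> {0..T} \<Longrightarrow> ((\<lambda>s. \<phi> s x - \<phi>' s x) has_vector_derivative B (\<xi> s) (\<phi> s x) - B (\<xi>' s) (\<phi>' s x)) (at s within {0..T})"
      by (intro derivative_intros a.phid b.phid)
    show "norm (\<phi> 0 x - \<phi>' 0 x) = 0" by (simp add: a.phi0 b.phi0)
    fix s assume s: "s \<in> {0..T}"
    have e: "B (\<xi> s) (\<phi> s x) - B (\<xi>' s) (\<phi>' s x) = (B (\<xi> s) (\<phi> s x) - B (\<xi> s) (\<phi>' s x)) + (B (\<xi> s) (\<phi>' s x) - B (\<xi>' s) (\<phi>' s x))"
      by simp
    have n1: "norm (B (\<xi> s) (\<phi> s x) - B (\<xi> s) (\<phi>' s x)) \<le> a.K * norm (\<phi> s x - \<phi>' s x)" by (rule a.F_lip[OF s])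
    have n2: "norm (B (\<xi> s) (\<phi>' s x) - B (\<xi>' s) (\<phi>' s x)) \<le> CB * dd"
    proof -
      have "norm (B (\<xi> s) (\<phi>' s x) - B (\<xi>' s) (\<phi>' s x)) \<le> CB * wnorm (\<xi> s - \<xi>' s)" by (rule standing_lip0[OF a.st])
      also have "\<dots> \<le> CB * dd" using dd_ge[OF s] a.CBpos by (intro mult_left_mono) auto
      finally show ?thesis .
    qed
    show "norm (B (\<xi> s) (\<phi> s x) - B (\<xi>' s) (\<phi>' s x)) \<le> a.K * norm (\<phi> s x - \<phi>' s x) + CB * dd"
      unfolding e using norm_triangle_ineq[of "B (\<xi> s) (\<phi> s x) - B (\<xi> s) (\<phi>' s x)" "B (\<xi> s) (\<phi>' s x) - B (\<xi>' s) (\<phi>' s x)"] n1 n2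
      by linarith
  qed
  also have "\<dots> \<le> (CB * dd) * T * exp (a.K * T)"
    using t b0 a.exp_KT[OF t] by (intro mult_mono mult_left_mono) auto
  finally show ?thesis .
qed

lemma Jac_diff:
  assumes t: "t \<in> {0..T}"
  shows "norm (a.Jac x t - b.Jac x t) \<le> ((a.K * (CB * dd * T * exp (a.K * T)) + CB * dd) * exp (b.K * T)) * T * exp (a.K * T)"
proof -
  define \<beta> where "\<beta> = (a.K * (CB * dd * T * exp (a.K * T)) + CB * dd) * exp (b.K * T)"
  have b0: "0 \<le> \<beta>" unfolding \<beta>_def using a.CBpos dd_nonneg a.Kpos a.Tpos by simp
  have "norm (a.Jac x t - b.Jac x t) \<le> \<beta> * t * exp (a.K * t)"
  proof (rule gc_lin[where f="\<lambda>s. a.Jac x s - b.Jac x s", OF less_imp_le[OF a.Kpos] b0 _ _ _ t])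
    fix s assume s: "s \<in> {0..T}"
    show "((\<lambda>s. a.Jac x s - b.Jac x s) has_vector_derivative
       (sD (B (\<xi> s)) (\<phi> s x) o\<^sub>L a.Jac x s) - (sD (B (\<xi>' s)) (\<phi>' s x) o\<^sub>L b.Jac x s)) (at s within {0..T})"
      using a.Jacd[OF s, of x] b.Jacd[OF s, of x] by (intro has_vector_derivative_diff)
    define A where "A = sD (B (\<xi> s)) (\<phi> s x)"
    define A1 where "A1 = sD (B (\<xi> s)) (\<phi>' s x)"
    define A2 where "A2 = sD (B (\<xi>' s)) (\<phi>' s x)"
    define J where "J = a.Jac x s"
    define J' where "J' = b.Jac x s"
    have e: "(A o\<^sub>L J) - (A2 o\<^sub>L J') = (A o\<^sub>L (J - J')) + ((A - A1) o\<^sub>L J') + ((A1 - A2) o\<^sub>L J')"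
      by (rule blinfun_eqI) (simp add: blinfun.bilinear_simps algebra_simps)
    have JE: "norm J' \<le> exp (b.K * T)" unfolding J'_def by (rule b.Jac_bndE[OF s])
    have n1: "norm (A o\<^sub>L (J - J')) \<le> a.K * norm (J - J')" unfolding A_def by (rule a.A_comp_bnd[OF s])
    have n2: "norm ((A - A1) o\<^sub>L J') \<le> (a.K * (CB * dd * T * exp (a.K * T))) * exp (b.K * T)"
    proof (rule comp_le[OF _ JE])
      have "norm (A - A1) \<le> a.K * norm (\<phi> s x - \<phi>' s x)" unfolding A_def A1_def by (rule a.DF_lip[OF s])
      also have "\<dots> \<le> a.K * (CB * dd * T * exp (a.K * T))"
        using phi_diff[OF s, of x] a.Kpos by (intro mult_left_mono) auto
      finally show "norm (A - A1) \<le> a.K * (CB * dd * T * exp (a.K * T))" .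
    qed
    have n3: "norm ((A1 - A2) o\<^sub>L J') \<le> (CB * dd) * exp (b.K * T)"
    proof (rule comp_le[OF _ JE])
      have "norm (A1 - A2) \<le> CB * wnorm (\<xi> s - \<xi>' s)" unfolding A1_def A2_def by (rule standing_lip1[OF a.st])
      also have "\<dots> \<le> CB * dd" using dd_ge[OF s] a.CBpos by (intro mult_left_mono) auto
      finally show "norm (A1 - A2) \<le> CB * dd" .
    qed
    have "norm ((A o\<^sub>L J) - (A2 o\<^sub>L J')) \<le> a.K * norm (J - J') + \<beta>"
      unfolding e \<beta>_def
      using norm_triangle_ineq[of "(A o\<^sub>L (J - J')) + ((A - A1) o\<^sub>L J')" "(A1 - A2) o\<^sub>L J'"]
        norm_triangle_ineq[of "A o\<^sub>L (J - J')" "(A - A1) o\<^sub>L J'"] n1 n2 n3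
      by (simp add: algebra_simps)
    then show "norm ((sD (B (\<xi> s)) (\<phi> s x) o\<^sub>L a.Jac x s) - (sD (B (\<xi>' s)) (\<phi>' s x) o\<^sub>L b.Jac x s))
        \<le> a.K * norm (a.Jac x s - b.Jac x s) + \<beta>"
      unfolding A_def A2_def J_def J'_def .
  next
    show "norm (a.Jac x 0 - b.Jac x 0) = 0" by (simp add: a.Jac0 b.Jac0)
  qed
  also have "\<dots> \<le> \<beta> * T * exp (a.K * T)"
    using t b0 a.exp_KT[OF t] by (intro mult_mono mult_left_mono) auto
  finally show ?thesis unfolding \<beta>_def .
qed

end

theorem lemma3p2:
  fixes B :: "'a::euclidean_space meas \<Rightarrow> 'a \<Rightarrow> 'a"
    and CB T :: real
    and \<xi> \<xi>' :: "real \<Rightarrow> 'a meas"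
    and \<phi> \<phi>' :: "real \<Rightarrow> 'a \<Rightarrow> 'a"
  assumes "standing B CB"
    and "T > 0"
    and "wcont T \<xi>" and "wcont T \<xi>'"
    and "is_flow B T \<xi> \<phi>" and "is_flow B T \<xi>' \<phi>'"
  shows "\<forall>t\<in>{0..T}.
      (\<forall>x. \<phi> t differentiable (at x) \<and> sD (\<phi> t) differentiable (at x))
    \<and> (\<forall>x. norm (sD (\<phi> t) x) \<le> exp (CB * T * (normT T \<xi> + 1)))
    \<and> (\<forall>x. norm (\<phi> t x - \<phi>' t x)
           \<le> CB * T * exp (CB * T * (normT T \<xi> + 1)) * normT T (\<lambda>s. \<xi> s - \<xi>' s))
    \<and> (\<forall>x. norm (sD (\<phi> t) x - sD (\<phi>' t) x)
           \<le> CB * T * exp (CB * (T + 1) * (normT T \<xi> + normT T \<xi>' + 2))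
              * (1 + CB * T * (normT T \<xi> + 1) * exp (CB * T * (normT T \<xi> + 1)))
              * normT T (\<lambda>s. \<xi> s - \<xi>' s))
    \<and> (\<forall>x y. norm (sD (\<phi> t) x - sD (\<phi> t) y)
           \<le> CB * T * (normT T \<xi> + 1) * exp (CB * (2 * T + 1) * (normT T \<xi> + 1)) * norm (x - y))"
proof -
  have f2: "flow2 B CB T \<xi> \<phi> \<xi>' \<phi>'"
    unfolding flow2_def flowctx_def using assms by auto
  interpret ab: flow2 B CB T \<xi> \<phi> \<xi>' \<phi>' by (rule f2)
  define n where "n = normT T \<xi>"
  define n' where "n' = normT T \<xi>'"
  define dl where "dl = normT T (\<lambda>s. \<xi> s - \<xi>' s)"
  have aK: "ab.a.K = CB * (n + 1)" unfolding ab.a.K_def n_def ..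
  have bK: "ab.b.K = CB * (n' + 1)" unfolding ab.b.K_def n'_def ..
  have dl: "ab.dd = dl" unfolding ab.dd_def dl_def ..
  have n0: "0 \<le> n" "0 \<le> n'" unfolding n_def n'_def
    using normT_nonneg[OF assms(3)] normT_nonneg[OF assms(4)] assms(2) by auto
  have CB0: "0 < CB" by (rule ab.a.CBpos)
  have dl0: "0 \<le> dl" using ab.dd_nonneg dl by simp
  show ?thesis
  proof (intro ballI conjI allI)
    fix t assume t: "t \<in> {0..T}"
    have sDe: "sD (\<phi> t) = (\<lambda>y. ab.a.Jac y t)" by (rule ext) (rule ab.a.sD_phi[OF t])
    have sDe': "sD (\<phi>' t) = (\<lambda>y. ab.b.Jac y t)" by (rule ext) (rule ab.b.sD_phi[OF t])
    fix x
    show "\<phi> t differentiable (at x)"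
      using ab.a.phi_deriv[OF t, of x] unfolding differentiable_def by blast
    show "sD (\<phi> t) differentiable (at x)"
      using ab.a.Jac_deriv[OF t, of x] unfolding sDe differentiable_def by blast
    show "norm (sD (\<phi> t) x) \<le> exp (CB * T * (normT T \<xi> + 1))"
      using ab.a.Jac_bndE[OF t, of x] unfolding sDe aK n_def by (simp add: algebra_simps)
    show "norm (\<phi> t x - \<phi>' t x) \<le> CB * T * exp (CB * T * (normT T \<xi> + 1)) * normT T (\<lambda>s. \<xi> s - \<xi>' s)"
      using ab.phi_diff[OF t, of x] unfolding aK dl n_def dl_def by (simp add: algebra_simps)
    show "norm (sD (\<phi> t) x - sD (\<phi>' t) x)
           \<le> CB * T * exp (CB * (T + 1) * (normT T \<xi> + normT T \<xi>' + 2))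
              * (1 + CB * T * (normT T \<xi> + 1) * exp (CB * T * (normT T \<xi> + 1)))
              * normT T (\<lambda>s. \<xi> s - \<xi>' s)"
    proof -
      define Ea where "Ea = exp (CB * (n + 1) * T)"
      define Eb where "Eb = exp (CB * (n' + 1) * T)"
      have "norm (sD (\<phi> t) x - sD (\<phi>' t) x) \<le> ((CB * (n + 1) * (CB * dl * T * Ea) + CB * dl) * Eb) * T * Ea"
        using ab.Jac_diff[OF t, of x] unfolding sDe sDe' aK bK dl Ea_def Eb_def .
      also have "\<dots> = (CB * T * (1 + CB * T * (n + 1) * Ea) * dl) * (Ea * Eb)"
        by (simp add: algebra_simps)
      also have "\<dots> \<le> (CB * T * (1 + CB * T * (n + 1) * Ea) * dl) * exp (CB * (T + 1) * (n + n' + 2))"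
      proof (rule mult_left_mono)
        have "Ea * Eb = exp (CB * (n + n' + 2) * T)" unfolding Ea_def Eb_def
          by (simp add: algebra_simps flip: exp_add)
        also have "\<dots> \<le> exp (CB * (T + 1) * (n + n' + 2))"
          using CB0 n0 by (simp add: mult_left_mono algebra_simps)
        finally show "Ea * Eb \<le> exp (CB * (T + 1) * (n + n' + 2))" .
        show "0 \<le> CB * T * (1 + CB * T * (n + 1) * Ea) * dl"
          using CB0 n0 dl0 assms(2) unfolding Ea_def by simp
      qed
      also have "\<dots> = CB * T * exp (CB * (T + 1) * (n + n' + 2)) * (1 + CB * T * (n + 1) * exp (CB * T * (n + 1))) * dl"
        unfolding Ea_def by (simp add: algebra_simps)
      finally show ?thesis unfolding n_def n'_def dl_def .
    qed
    fix y
    show "norm (sD (\<phi> t) x - sD (\<phi> t) y)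
           \<le> CB * T * (normT T \<xi> + 1) * exp (CB * (2 * T + 1) * (normT T \<xi> + 1)) * norm (x - y)"
    proof -
      define K where "K = CB * (n + 1)"
      have K0: "0 < K" unfolding K_def using CB0 n0 by simp
      have t0: "0 \<le> t" "t \<le> T" using t by auto
      have e1: "exp (K * t) \<le> exp (K * T)" using K0 t0 by (simp add: mult_left_mono)
      have e2: "exp (K * t) - 1 \<le> K * T * exp (K * T)"
      proof -
        have "exp (K * t) - 1 \<le> (K * t) * exp (K * t)" using K0 t0 by (intro exp_minus_one_le) simp
        also have "\<dots> \<le> (K * T) * exp (K * T)" using K0 t0 e1 by (intro mult_mono) auto
        finally show ?thesis .
      qed
      have e3: "exp (K * t) * (exp (K * t) - 1) \<le> exp (K * T) * (K * T * exp (K * T))"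
        using e1 e2 K0 t0 by (intro mult_mono) auto
      also have "\<dots> \<le> K * T * exp (K * (2 * T + 1))"
      proof -
        have "exp (K * T) * (K * T * exp (K * T)) = K * T * exp (K * (2 * T))"
          by (simp add: algebra_simps flip: exp_add)
        also have "\<dots> \<le> K * T * exp (K * (2 * T + 1))"
          using K0 assms(2) by (intro mult_left_mono) (auto simp: algebra_simps)
        finally show ?thesis .
      qed
      finally have e4: "exp (K * t) * (exp (K * t) - 1) \<le> K * T * exp (K * (2 * T + 1))" .
      have "norm (sD (\<phi> t) x - sD (\<phi> t) y) \<le> norm (x - y) * (exp (K * t) * (exp (K * t) - 1))"
        using ab.a.Jac_lip[OF t, of x y] unfolding sDe aK K_def .
      also have "\<dots> \<le> norm (x - y) * (K * T * exp (K * (2 * T + 1)))"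
        by (intro mult_left_mono e4) auto
      also have "\<dots> = CB * T * (n + 1) * exp (CB * (2 * T + 1) * (n + 1)) * norm (x - y)"
        unfolding K_def by (simp add: algebra_simps)
      finally show ?thesis unfolding n_def .
    qed
  qed
qed

end
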